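(* Let $(X,Y)$ be a conditionally dependent (CD) random vector with function $s$, where $X$ has distribution $F$ and $Y$ has distribution $G$. Assume $F\in\mathscr R_{-\alpha}$ for some $\alpha\ge0$, with $\overline F(x)\sim x^{-\alpha}L(x)$ for a positive slowly varying function $L$, and $\overline G(x)=o(\overline F(x))$ as $x\to\infty$. Suppose that either (i) $\mathrm E\big(Y^{\alpha+\varepsilon}s(Y)\big)<\infty$ for some $\varepsilon>0$; or (ii) there exists a positive function $g$ on $[0,\infty)$ with $g(x)\downarrow0$, $xg(x)\uparrow\infty$ and $\overline G(xg(x))=o(\overline F(x))$, such that $\limsup_{x\to\infty}\sup_{1\le y\le xg(x)}L(x/y)/L(x)<\infty$, and $\mathrm E\big(Y^\alpha s(Y)\big)<\infty$. Then, with $H$ the distribution of $XY$, $$\overline H(x)=\mathrm P(XY>x)\sim\mathrm E\big(Y^\alpha s(Y)\big)\overline F(x),\qquad x\to\infty.$$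
   Context: $X$ is real-valued with distribution $F$ such that $\overline F(x)=1-F(x)>0$ for all $x\in\mathbb{R}$, and $Y$ takes values in $(0,\infty)$ with distribution $G$, $\overline G=1-G$. $D_Y=\{y\in(0,\infty):\mathrm P(Y\in(y-\delta,y+\delta))>0\ \forall\delta>0\}$. For $x\in\mathbb{R}$, $y\in D_Y$, $\mathrm P(X>x\mid Y=y)=\lim_{t\downarrow0}\mathrm P(X>x,Y\in[y,y+t))/\mathrm P(Y\in[y,y+t))$ when the limit exists. $(X,Y)$ is conditionally dependent (CD) with function $s$ if $s$ is a positive measurable function on $[0,\infty)$ such that these conditional tails exist and $\lim_{x\to\infty}\sup_{y\in D_Y}|\mathrm P(X>x\mid Y=y)/(\overline F(x)s(y))-1|=0$. $F\in\mathscr R_{-\alpha}$ (regularly varying tail with index $\alpha$) means $\overline F(xy)/\overline F(x)\to y^{-\alpha}$ as $x\to\infty$ for each $y>0$; $L$ is slowly varying if $L(xy)/L(x)\to1$ for each $y>0$. $a(x)\sim b(x)$ means $a(x)/b(x)\to1$ as $x\to\infty$. *)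

theory Defs
  imports "HOL-Probability.Probability" "HOL-Library.Landau_Symbols"
begin

definition tail :: "'a measure \<Rightarrow> ('a \<Rightarrow> real) \<Rightarrow> real \<Rightarrow> real" where
  "tail M X x = measure M {\<omega> \<in> space M. X \<omega> > x}"

definition DY :: "'a measure \<Rightarrow> ('a \<Rightarrow> real) \<Rightarrow> real set" where
  "DY M Y = {y. 0 < y \<and> (\<forall>\<delta>>0. measure M {\<omega> \<in> space M. Y \<omega> \<in> {y-\<delta><..<y+\<delta>}} > 0)}"

text \<open>The ratio whose limit as t decreases to 0 defines P(X > x | Y = y).\<close>
definition cond_ratio :: "'a measure \<Rightarrow> ('a \<Rightarrow> real) \<Rightarrow> ('a \<Rightarrow> real) \<Rightarrow> real \<Rightarrow> real \<Rightarrow> real \<Rightarrow> real" where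
  "cond_ratio M X Y x y t =
     measure M {\<omega> \<in> space M. X \<omega> > x \<and> Y \<omega> \<in> {y..<y+t}} / measure M {\<omega> \<in> space M. Y \<omega> \<in> {y..<y+t}}"

definition cond_tail :: "'a measure \<Rightarrow> ('a \<Rightarrow> real) \<Rightarrow> ('a \<Rightarrow> real) \<Rightarrow> real \<Rightarrow> real \<Rightarrow> real" where
  "cond_tail M X Y x y = Lim (at_right 0) (cond_ratio M X Y x y)"

definition CD :: "'a measure \<Rightarrow> ('a \<Rightarrow> real) \<Rightarrow> ('a \<Rightarrow> real) \<Rightarrow> (real \<Rightarrow> real) \<Rightarrow> bool" where
  "CD M X Y s \<longleftrightarrow>
     s \<in> borel_measurable (restrict_space borel {0..}) \<and> (\<forall>y\<ge>0. s y > 0) \<and>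
     (\<forall>x y. y \<in> DY M Y \<longrightarrow> (\<exists>p. (cond_ratio M X Y x y \<longlongrightarrow> p) (at_right 0))) \<and>
     (\<forall>\<epsilon>>0. eventually (\<lambda>x. \<forall>y \<in> DY M Y.
         \<bar>cond_tail M X Y x y / (tail M X x * s y) - 1\<bar> \<le> \<epsilon>) at_top)"

definition regvar_tail :: "(real \<Rightarrow> real) \<Rightarrow> real \<Rightarrow> bool" where
  "regvar_tail Fb \<alpha> \<longleftrightarrow> (\<forall>y>0. ((\<lambda>x. Fb (x * y) / Fb x) \<longlongrightarrow> y powr (-\<alpha>)) at_top)"

definition slowly_varying :: "(real \<Rightarrow> real) \<Rightarrow> bool" where
  "slowly_varying L \<longleftrightarrow> (\<forall>y>0. ((\<lambda>x. L (x * y) / L x) \<longlongrightarrow> 1) at_top)"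

end

theory Submission
  imports Defs
begin

lemma cover_lemma:
  fixes m1 m2 :: "real measure" and K U :: "real set"
  assumes f1: "finite_measure m1" and f2: "finite_measure m2"
    and s1: "sets m1 = sets borel" and s2: "sets m2 = sets borel"
    and c: "c \<ge> 0" and K: "compact K" and U: "open U" and KU: "K \<subseteq> U"
    and hyp: "\<forall>y\<in>K. \<forall>\<delta>>0. \<exists>t>0. t < \<delta> \<and> measure m1 {y..<y+t} \<le> c * measure m2 {y..<y+t}"
  shows "measure m1 K \<le> c * measure m2 U"
proof -
  interpret m1: finite_measure m1 by (fact f1)
  interpret m2: finite_measure m2 by (fact f2)
  have meas1[measurable]: "A \<in> sets borel \<Longrightarrow> A \<in> sets m1" for A using s1 by simp
  have meas2[measurable]: "A \<in> sets borel \<Longrightarrow> A \<in> sets m2" for A using s2 by simp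
  have Kb: "K \<in> sets borel" using K by (simp add: compact_imp_closed borel_closed)
  have Ub: "U \<in> sets borel" using U by simp
  obtain B where B: "\<forall>x\<in>K. norm x \<le> B" using compact_imp_bounded[OF K] bounded_iff by blast
  define a where "a = -\<bar>B\<bar> - 1"
  define b where "b = \<bar>B\<bar> + 1"
  have Kab: "K \<subseteq> {a..<b}" using B unfolding a_def b_def by (force simp: abs_le_iff)
  have ab: "a < b" unfolding a_def b_def by simp
  define P where "P u \<longleftrightarrow> measure m1 (K \<inter> {a..<u}) \<le> c * measure m2 (U \<inter> {a..<u})" for u
  define S where "S = {u. a \<le> u \<and> u \<le> b \<and> P u}"
  define z where "z = Sup S"
  have aS: "a \<in> S" unfolding S_def P_def using ab by simp
  have bddS: "bdd_above S" unfolding S_def by (rule bdd_aboveI[of _ b]) auto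
  have Sne: "S \<noteq> {}" using aS by blast
  have az: "a \<le> z" unfolding z_def by (rule cSup_upper[OF aS bddS])
  have zb: "z \<le> b" unfolding z_def by (rule cSup_least[OF Sne]) (auto simp: S_def)
  have Pz: "P z"
  proof -
    define A where "A n = {z - 1/(real n+1)..<z}" for n :: nat
    have lim: "(\<lambda>n. measure m1 (A n)) \<longlonglongrightarrow> measure m1 (\<Inter>n. A n)"
    proof (rule m1.finite_Lim_measure_decseq)
      show "range A \<subseteq> sets m1" unfolding A_def by auto
      show "antimono_on UNIV A" unfolding A_def
        by (rule antimonoI) (auto simp: frac_le)
    qed
    have "(\<Inter>n. A n) = {}"
    proof safe
      fix x assume "x \<in> (\<Inter>n. A n)"
      then have x: "\<forall>n. z - 1/(real n+1) \<le> x \<and> x < z" unfolding A_def by auto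
      then have "x < z" by auto
      obtain n :: nat where "1 / (z - x) < real n + 1"
        using reals_Archimedean2 by (metis add.commute add_strict_increasing zero_less_one order_less_imp_le)
      then have "1/(real n + 1) < z - x" using \<open>x < z\<close>
        by (simp add: divide_less_eq field_simps)
      with x show "x \<in> {}" by (metis diff_le_eq leD add.commute)
    qed
    with lim have lim0: "(\<lambda>n. measure m1 (A n)) \<longlonglongrightarrow> 0" by simp
    have bound: "measure m1 (K \<inter> {a..<z}) - c * measure m2 (U \<inter> {a..<z}) \<le> measure m1 (A n)" for n
    proof -
      have "z - 1/(real n+1) < z" by simp
      then obtain u where uS: "u \<in> S" and u: "z - 1/(real n+1) < u"
        using less_cSupD[OF Sne] unfolding z_def by blast
      have uz: "u \<le> z" unfolding z_def by (rule cSup_upper[OF uS bddS])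
      have Pu: "P u" and au: "a \<le> u" using uS unfolding S_def by auto
      have "K \<inter> {a..<z} \<subseteq> (K \<inter> {a..<u}) \<union> A n" using u unfolding A_def by auto
      then have "measure m1 (K \<inter> {a..<z}) \<le> measure m1 ((K \<inter> {a..<u}) \<union> A n)"
        by (intro m1.finite_measure_mono) (use Kb in \<open>simp_all add: A_def s1 s2\<close>)
      also have "\<dots> \<le> measure m1 (K \<inter> {a..<u}) + measure m1 (A n)"
        by (intro measure_Un_le) (use Kb in \<open>simp_all add: A_def s1 s2\<close>)
      also have "measure m1 (K \<inter> {a..<u}) \<le> c * measure m2 (U \<inter> {a..<u})" using Pu P_def by simp
      also have "measure m2 (U \<inter> {a..<u}) \<le> measure m2 (U \<inter> {a..<z})"
        using uz by (intro m2.finite_measure_mono) (use Ub in \<open>auto simp add: s1 s2\<close>)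
      finally show ?thesis using c by (smt (verit) mult_left_mono)
    qed
    have "measure m1 (K \<inter> {a..<z}) - c * measure m2 (U \<inter> {a..<z}) \<le> 0"
      by (rule LIMSEQ_le_const[OF lim0]) (use bound in auto)
    then show ?thesis unfolding P_def by simp
  qed
  have "z = b"
  proof (rule ccontr)
    assume "z \<noteq> b" with zb have zb': "z < b" by simp
    have "\<exists>t>0. z + t \<le> b \<and> P (z + t)"
    proof (cases "z \<in> K")
      case True
      with KU U obtain e where e: "e > 0" "ball z e \<subseteq> U" by (meson open_contains_ball subsetD)
      from hyp True obtain t where t: "t > 0" "t < min e (b - z)"
        and tm: "measure m1 {z..<z+t} \<le> c * measure m2 {z..<z+t}"
        using e zb' by (metis min_less_iff_conj diff_gt_0_iff_gt)
      have zU: "{z..<z+t} \<subseteq> U" using t e by (auto simp: dist_real_def subset_iff)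
      have "measure m1 (K \<inter> {a..<z+t}) \<le> measure m1 ((K \<inter> {a..<z}) \<union> {z..<z+t})"
        by (intro m1.finite_measure_mono) (use Kb in \<open>auto simp add: s1 s2\<close>)
      also have "\<dots> \<le> measure m1 (K \<inter> {a..<z}) + measure m1 {z..<z+t}"
        by (intro measure_Un_le) (use Kb in \<open>auto simp add: s1 s2\<close>)
      also have "\<dots> \<le> c * measure m2 (U \<inter> {a..<z}) + c * measure m2 {z..<z+t}"
        using Pz tm unfolding P_def by simp
      also have "\<dots> = c * measure m2 ((U \<inter> {a..<z}) \<union> {z..<z+t})"
        by (subst m2.finite_measure_Union) (use Ub in \<open>auto simp add: s1 s2 algebra_simps\<close>)
      also have "(U \<inter> {a..<z}) \<union> {z..<z+t} = U \<inter> {a..<z+t}" using zU az t by auto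
      finally show ?thesis using t unfolding P_def by (intro exI[of _ t]) auto
    next
      case False
      have "open (- K)" using K by (simp add: compact_imp_closed open_Compl)
      with False obtain e where e: "e > 0" "ball z e \<subseteq> - K" by (meson ComplI open_contains_ball)
      define t where "t = min e (b - z) / 2"
      have t: "t > 0" "t < e" "z + t \<le> b" using e zb' unfolding t_def by (auto simp: min_def field_simps)
      have "K \<inter> {a..<z+t} = K \<inter> {a..<z}" using e t by (force simp: dist_real_def subset_iff)
      moreover have "measure m2 (U \<inter> {a..<z}) \<le> measure m2 (U \<inter> {a..<z+t})"
        using t by (intro m2.finite_measure_mono) (use Ub in \<open>auto simp add: s1 s2\<close>)
      ultimately have "P (z + t)" using Pz c unfolding P_def by (smt (verit) mult_left_mono)
      with t show ?thesis by blast
    qed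
    then obtain t where t: "t > 0" "z + t \<le> b" "P (z + t)" by blast
    then have "z + t \<in> S" unfolding S_def using az by auto
    then have "z + t \<le> z" unfolding z_def by (rule cSup_upper[OF _ bddS])
    with t show False by simp
  qed
  with Pz have "measure m1 (K \<inter> {a..<b}) \<le> c * measure m2 (U \<inter> {a..<b})" unfolding P_def by simp
  moreover have "K \<inter> {a..<b} = K" using Kab by auto
  moreover have "measure m2 (U \<inter> {a..<b}) \<le> measure m2 U"
    by (intro m2.finite_measure_mono) (use Ub in \<open>auto simp add: s1 s2\<close>)
  ultimately show ?thesis using c by (smt (verit) mult_left_mono)
qed

lemma level_bound:
  fixes m1 m2 :: "real measure" and B :: "real set"
  assumes f1: "finite_measure m1" and f2: "finite_measure m2"
    and s1: "sets m1 = sets borel" and s2: "sets m2 = sets borel"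
    and c: "c \<ge> 0" and Bb: "B \<in> sets borel"
    and hyp: "\<forall>y\<in>B. \<forall>\<delta>>0. \<exists>t>0. t < \<delta> \<and> measure m1 {y..<y+t} \<le> c * measure m2 {y..<y+t}"
  shows "measure m1 B \<le> c * measure m2 B"
proof -
  interpret m1: finite_measure m1 by (fact f1)
  interpret m2: finite_measure m2 by (fact f2)
  have inner: "emeasure m1 B = (SUP K\<in>{K. K \<subseteq> B \<and> compact K}. emeasure m1 K)"
    by (rule inner_regular[OF s1 _ Bb]) simp
  have "emeasure m1 B \<le> ennreal (c * measure m2 B)"
    unfolding inner
  proof (rule SUP_least)
    fix K assume "K \<in> {K. K \<subseteq> B \<and> compact K}"
    then have KB: "K \<subseteq> B" and K: "compact K" by auto
    have Kb: "K \<in> sets borel" using K by (simp add: compact_imp_closed borel_closed)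
    have hypK: "\<forall>y\<in>K. \<forall>\<delta>>0. \<exists>t>0. t < \<delta> \<and> measure m1 {y..<y+t} \<le> c * measure m2 {y..<y+t}"
      using hyp KB by blast
    have Kc: "measure m1 K \<le> c * measure m2 K"
    proof (cases "c = 0")
      case True
      have "measure m1 K \<le> c * measure m2 UNIV"
        by (rule cover_lemma[OF f1 f2 s1 s2 c K open_UNIV _ hypK]) simp
      with True show ?thesis by simp
    next
      case False
      with c have cpos: "c > 0" by simp
      have outer: "emeasure m2 K = (INF U\<in>{U. K \<subseteq> U \<and> open U}. emeasure m2 U)"
        by (rule outer_regular[OF s2 _ Kb]) simp
      have "ennreal (measure m1 K / c) \<le> emeasure m2 K"
        unfolding outer
      proof (rule INF_greatest)
        fix U assume "U \<in> {U. K \<subseteq> U \<and> open U}"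
        then have "K \<subseteq> U" "open U" by auto
        from cover_lemma[OF f1 f2 s1 s2 c K this(2) this(1) hypK]
        have "measure m1 K / c \<le> measure m2 U" using cpos by (simp add: divide_le_eq mult.commute)
        then show "ennreal (measure m1 K / c) \<le> emeasure m2 U"
          by (simp add: m2.emeasure_eq_measure)
      qed
      then have "measure m1 K / c \<le> measure m2 K"
        by (simp add: m2.emeasure_eq_measure)
      then show ?thesis using cpos by (simp add: divide_le_eq mult.commute)
    qed
    also have "c * measure m2 K \<le> c * measure m2 B"
      using KB Bb c by (intro mult_left_mono m2.finite_measure_mono) (auto simp: s2)
    finally show "emeasure m1 K \<le> ennreal (c * measure m2 B)"
      by (simp add: m1.emeasure_eq_measure ennreal_leI)
  qed
  then show ?thesis using c by (simp add: m1.emeasure_eq_measure)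
qed

lemma level_sets:
  fixes B :: "real set" and v :: "real \<Rightarrow> real"
  assumes Bb: "B \<in> sets borel" and v: "v \<in> borel_measurable borel"
    and vpos: "\<forall>y\<in>B. 0 < v y \<and> v y \<le> S0" and r: "0 < r" "r < 1"
  obtains L where "\<And>k. L k \<in> sets borel" "disjoint_family L" "(\<Union>k. L k) = B"
    "\<And>k. L k \<subseteq> B" "\<And>k y. y \<in> L k \<Longrightarrow> S0*r^(k+1) < v y \<and> v y \<le> S0*r^k"
proof -
  define L where "L k = {y\<in>B. S0*r^(k+1) < v y \<and> v y \<le> S0*r^k}" for k :: nat
  have Lb: "L k \<in> sets borel" for k unfolding L_def using Bb v by measurable
  have disj: "disjoint_family L"
    unfolding disjoint_family_on_def
  proof (intro ballI impI)
    fix k k' :: nat assume "k \<noteq> k'"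
    show "L k \<inter> L k' = {}"
    proof (rule ccontr)
      assume "L k \<inter> L k' \<noteq> {}"
      then obtain y where y: "y \<in> L k" "y \<in> L k'" by blast
      have S0: "S0 > 0" using y vpos unfolding L_def by fastforce
      have gen: "False" if "y \<in> L i" "y \<in> L j" "i < j" for i j
      proof -
        have "r^j \<le> r^(i+1)" using r that(3) by (intro power_decreasing) auto
        then have "S0 * r^j \<le> S0 * r^(i+1)" using S0 by simp
        with that show False unfolding L_def by auto
      qed
      show False using \<open>k \<noteq> k'\<close> gen y by (metis linorder_neq_iff)
    qed
  qed
  have cover: "(\<Union>k. L k) = B"
  proof
    show "(\<Union>k. L k) \<subseteq> B" unfolding L_def by auto
    show "B \<subseteq> (\<Union>k. L k)"
    proof
      fix y assume yB: "y \<in> B"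
      then have vy: "0 < v y" "v y \<le> S0" using vpos by auto
      then have S0: "S0 > 0" by simp
      have "\<exists>n. r^n < v y / S0" using r vy S0 by (intro real_arch_pow_inv) auto
      then have ex: "\<exists>n. r^(n+1) < v y / S0" by (metis less_trans power_Suc_less r Suc_eq_plus1 power_strict_decreasing less_Suc_eq) 
      define k where "k = (LEAST n. r^(n+1) < v y / S0)"
      have k1: "r^(k+1) < v y / S0" unfolding k_def by (rule LeastI_ex[OF ex])
      have k2: "v y / S0 \<le> r^k"
      proof (cases k)
        case 0 then show ?thesis using vy S0 by simp
      next
        case (Suc m)
        then have "\<not> r^(m+1) < v y / S0" using not_less_Least[of m "\<lambda>n. r^(n+1) < v y / S0"] k_def by auto
        then show ?thesis using Suc by simp
      qed
      have "y \<in> L k" unfolding L_def using yB k1 k2 S0 by (auto simp: field_simps)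
      then show "y \<in> (\<Union>k. L k)" by blast
    qed
  qed
  show ?thesis
    by (rule that[OF Lb disj cover]) (auto simp: L_def)
qed

lemma set_integrable_bdd:
  fixes m2 :: "real measure" and v :: "real \<Rightarrow> real" and Sb :: real
  assumes f2: "finite_measure m2" and s2: "sets m2 = sets borel"
    and Ab: "A \<in> sets borel" and v: "v \<in> borel_measurable borel"
    and vb: "\<forall>y\<in>A. 0 \<le> v y \<and> v y \<le> Sb"
  shows "set_integrable m2 A v"
  unfolding set_integrable_def
proof (rule finite_measure.integrable_const_bound[OF f2, where B="\<bar>Sb\<bar>"])
  show "AE x in m2. norm (indicator A x *\<^sub>R v x) \<le> \<bar>Sb\<bar>"
  proof (intro AE_I2)
    fix x show "norm (indicator A x *\<^sub>R v x) \<le> \<bar>Sb\<bar>"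
      using vb by (cases "x \<in> A") auto
  qed
  show "(\<lambda>x. indicator A x *\<^sub>R v x) \<in> borel_measurable m2"
    using Ab v by (simp add: measurable_cong_sets[OF s2 refl])
qed

lemma sum_upper:
  fixes m1 m2 :: "real measure" and B :: "real set" and v :: "real \<Rightarrow> real"
  assumes f1: "finite_measure m1" and f2: "finite_measure m2"
    and s1: "sets m1 = sets borel" and s2: "sets m2 = sets borel"
    and Bb: "B \<in> sets borel" and v: "v \<in> borel_measurable borel"
    and vpos: "\<forall>y\<in>B. 0 < v y \<and> v y \<le> S0" and r: "0 < r" "r < 1" and c: "c \<ge> 0"
    and hyp: "\<forall>y\<in>B. \<forall>\<delta>>0. \<exists>t>0. t < \<delta> \<and> measure m1 {y..<y+t} \<le> c * v y * measure m2 {y..<y+t}"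
  shows "measure m1 B \<le> c / r * (LINT y:B|m2. v y)"
proof -
  interpret m1: finite_measure m1 by (fact f1)
  interpret m2: finite_measure m2 by (fact f2)
  obtain L where Lb: "\<And>k. L k \<in> sets borel" and disj: "disjoint_family L" and cov: "(\<Union>k. L k) = B"
    and LB: "\<And>k. L k \<subseteq> B" and Lv: "\<And>k y. y \<in> L k \<Longrightarrow> S0*r^(k+1) < v y \<and> v y \<le> S0*r^k"
    using level_sets[OF Bb v vpos r] by metis
  have Lint: "set_integrable m2 A v" if "A \<in> sets borel" "A \<subseteq> B" for A
    using that vpos by (intro set_integrable_bdd[OF f2 s2 _ v, where Sb=S0]) (auto, meson less_imp_le subsetD)
  have Lk: "measure m1 (L k) \<le> c / r * (LINT y:L k|m2. v y)" for k
  proof (cases "L k = {}")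
    case True then show ?thesis by (simp add: set_lebesgue_integral_def)
  next
    case False
    then obtain y0 where "y0 \<in> L k" by blast
    with Lv vpos LB have S0: "S0 > 0" by (meson less_le_trans subsetD)
    have "measure m1 (L k) \<le> (c * (S0*r^k)) * measure m2 (L k)"
    proof (rule level_bound[OF f1 f2 s1 s2 _ Lb])
      show "0 \<le> c * (S0 * r ^ k)" using c r S0 by simp
      show "\<forall>y\<in>L k. \<forall>\<delta>>0. \<exists>t>0. t < \<delta> \<and> measure m1 {y..<y + t} \<le> c * (S0 * r ^ k) * measure m2 {y..<y + t}"
      proof (intro ballI allI impI)
        fix y \<delta> :: real assume y: "y \<in> L k" and d: "\<delta> > 0"
        from hyp y d LB obtain t where t: "t > 0" "t < \<delta>" "measure m1 {y..<y+t} \<le> c * v y * measure m2 {y..<y+t}"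
          by blast
        have "c * v y * measure m2 {y..<y+t} \<le> c * (S0 * r ^ k) * measure m2 {y..<y+t}"
          using Lv[OF y] c by (intro mult_right_mono mult_left_mono) auto
        with t show "\<exists>t>0. t < \<delta> \<and> measure m1 {y..<y + t} \<le> c * (S0 * r ^ k) * measure m2 {y..<y + t}"
          by (intro exI[of _ t]) auto
      qed
    qed
    then have A: "measure m1 (L k) \<le> c / r * (S0*r^(k+1) * measure m2 (L k))" using r by (simp add: field_simps)
    have B: "S0*r^(k+1) * measure m2 (L k) = (LINT y:L k|m2. S0*r^(k+1))"
      using Lb[of k] by (subst set_integral_const) (auto simp: s2)
    have C: "(LINT y:L k|m2. S0*r^(k+1)) \<le> (LINT y:L k|m2. v y)"
    proof (rule set_integral_mono)
      show "set_integrable m2 (L k) (\<lambda>y. S0 * r ^ (k + 1))"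
        unfolding set_integrable_def using Lb[of k]
        by (intro integrable_mult_indicator) (auto simp: s2)
      show "set_integrable m2 (L k) v" by (rule Lint[OF Lb LB])
    qed (use Lv in \<open>auto intro: less_imp_le\<close>)
    have BC: "S0*r^(k+1) * measure m2 (L k) \<le> (LINT y:L k|m2. v y)" using B C by linarith
    have "c / r * (S0*r^(k+1) * measure m2 (L k)) \<le> c / r * (LINT y:L k|m2. v y)"
      using c r by (intro mult_left_mono[OF BC]) auto
    with A show ?thesis by linarith
  qed
  have sums: "(\<lambda>k. measure m1 (L k)) sums measure m1 B"
    using m1.finite_measure_UNION[of L] Lb disj cov by (auto simp: s1)
  have part: "(\<Sum>k<n. measure m1 (L k)) \<le> c / r * (LINT y:B|m2. v y)" for n
  proof -
    have P1: "(\<Sum>k<n. measure m1 (L k)) \<le> (\<Sum>k<n. c / r * (LINT y:L k|m2. v y))"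
      by (intro sum_mono Lk)
    have P2: "(\<Sum>k<n. c / r * (LINT y:L k|m2. v y)) = c / r * (LINT y:(\<Union>k\<in>{..<n}. L k)|m2. v y)"
      by (subst set_integral_finite_Union)
         (use disj Lb LB Lint in \<open>auto simp: sum_distrib_left s2 disjoint_family_on_def\<close>)
    have P3: "(LINT y:(\<Union>k\<in>{..<n}. L k)|m2. v y) \<le> (LINT y:B|m2. v y)"
      unfolding set_lebesgue_integral_def
    proof (rule integral_mono)
      show "integrable m2 (\<lambda>x. indicator (\<Union> (L ` {..<n})) x *\<^sub>R v x)"
        using Lint[of "\<Union> (L ` {..<n})"] Lb LB unfolding set_integrable_def by auto
      show "integrable m2 (\<lambda>x. indicator B x *\<^sub>R v x)"
        using Lint[OF Bb] unfolding set_integrable_def by auto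
      show "indicator (\<Union> (L ` {..<n})) x *\<^sub>R v x \<le> indicator B x *\<^sub>R v x" for x
        using LB vpos by (auto simp: indicator_def less_imp_le)
    qed
    have P4: "c / r * (LINT y:(\<Union>k\<in>{..<n}. L k)|m2. v y) \<le> c / r * (LINT y:B|m2. v y)"
      using c r by (intro mult_left_mono[OF P3]) auto
    from P1 P2 P4 show ?thesis by linarith
  qed
  show ?thesis
    using sums part unfolding sums_def by (intro LIMSEQ_le_const2) auto
qed

lemma sum_lower:
  fixes m1 m2 :: "real measure" and B :: "real set" and v :: "real \<Rightarrow> real"
  assumes f1: "finite_measure m1" and f2: "finite_measure m2"
    and s1: "sets m1 = sets borel" and s2: "sets m2 = sets borel"
    and Bb: "B \<in> sets borel" and v: "v \<in> borel_measurable borel"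
    and vpos: "\<forall>y\<in>B. 0 < v y \<and> v y \<le> S0" and r: "0 < r" "r < 1" and c: "c > 0"
    and hyp: "\<forall>y\<in>B. \<forall>\<delta>>0. \<exists>t>0. t < \<delta> \<and> c * v y * measure m2 {y..<y+t} \<le> measure m1 {y..<y+t}"
  shows "c * r * (LINT y:B|m2. v y) \<le> measure m1 B"
proof -
  interpret m1: finite_measure m1 by (fact f1)
  interpret m2: finite_measure m2 by (fact f2)
  obtain L where Lb: "\<And>k. L k \<in> sets borel" and disj: "disjoint_family L" and cov: "(\<Union>k. L k) = B"
    and LB: "\<And>k. L k \<subseteq> B" and Lv: "\<And>k y. y \<in> L k \<Longrightarrow> S0*r^(k+1) < v y \<and> v y \<le> S0*r^k"
    using level_sets[OF Bb v vpos r] by metis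
  have Lint: "set_integrable m2 A v" if "A \<in> sets borel" "A \<subseteq> B" for A
    using that vpos by (intro set_integrable_bdd[OF f2 s2 _ v, where Sb=S0]) (auto, meson less_imp_le subsetD)
  have Lk: "c * r * (LINT y:L k|m2. v y) \<le> measure m1 (L k)" for k
  proof (cases "L k = {}")
    case True then show ?thesis by (simp add: set_lebesgue_integral_def)
  next
    case False
    then obtain y0 where "y0 \<in> L k" by blast
    with Lv vpos LB have S0: "S0 > 0" by (meson less_le_trans subsetD)
    define d where "d = c * (S0*r^(k+1))"
    have d: "d > 0" unfolding d_def using c S0 r by simp
    have "measure m2 (L k) \<le> (1/d) * measure m1 (L k)"
    proof (rule level_bound[OF f2 f1 s2 s1 _ Lb])
      show "0 \<le> 1/d" using d by simp
      show "\<forall>y\<in>L k. \<forall>\<delta>>0. \<exists>t>0. t < \<delta> \<and> measure m2 {y..<y + t} \<le> 1/d * measure m1 {y..<y + t}"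
      proof (intro ballI allI impI)
        fix y \<delta> :: real assume y: "y \<in> L k" and dl: "\<delta> > 0"
        from hyp y dl LB obtain t where t: "t > 0" "t < \<delta>" "c * v y * measure m2 {y..<y+t} \<le> measure m1 {y..<y+t}"
          by blast
        have "d * measure m2 {y..<y+t} \<le> c * v y * measure m2 {y..<y+t}"
          unfolding d_def using Lv[OF y] c by (intro mult_right_mono mult_left_mono) auto
        with t have "d * measure m2 {y..<y+t} \<le> measure m1 {y..<y+t}" by linarith
        then have "measure m2 {y..<y+t} \<le> 1/d * measure m1 {y..<y+t}"
          using d by (simp add: field_simps)
        with t show "\<exists>t>0. t < \<delta> \<and> measure m2 {y..<y + t} \<le> 1/d * measure m1 {y..<y + t}"
          by (intro exI[of _ t]) auto
      qed
    qed
    then have m2m1: "d * measure m2 (L k) \<le> measure m1 (L k)" using d by (simp add: field_simps)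
    have "(LINT y:L k|m2. v y) \<le> (LINT y:L k|m2. S0*r^k)"
    proof (rule set_integral_mono)
      show "set_integrable m2 (L k) (\<lambda>y. S0 * r ^ k)"
        unfolding set_integrable_def using Lb[of k]
        by (intro integrable_mult_indicator) (auto simp: s2)
      show "set_integrable m2 (L k) v" by (rule Lint[OF Lb LB])
    qed (use Lv in auto)
    also have "(LINT y:L k|m2. S0*r^k) = S0*r^k * measure m2 (L k)"
      using Lb[of k] by (subst set_integral_const) (auto simp: s2)
    finally have "c * r * (LINT y:L k|m2. v y) \<le> c * r * (S0*r^k * measure m2 (L k))"
      using c r by (intro mult_left_mono) auto
    also have "\<dots> = d * measure m2 (L k)" unfolding d_def by (simp add: field_simps)
    finally show ?thesis using m2m1 by linarith
  qed
  define A where "A n = (\<Union>k\<in>{..<n}. L k)" for n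
  have Ab: "A n \<in> sets m2" for n unfolding A_def using Lb by (auto simp: s2)
  have incA: "incseq A" unfolding A_def incseq_def by (auto, meson less_le_trans lessThan_iff)
  have UA: "(\<Union>n. A n) = B" unfolding A_def using cov by auto
  have lim: "(\<lambda>n. LINT y:A n|m2. v y) \<longlonglongrightarrow> (LINT y:B|m2. v y)"
    using set_integral_cont_up[of A m2 v, OF Ab incA] UA Lint[OF Bb] by auto
  have part: "c * r * (LINT y:A n|m2. v y) \<le> measure m1 B" for n
  proof -
    have "c * r * (LINT y:A n|m2. v y) = (\<Sum>k<n. c * r * (LINT y:L k|m2. v y))"
      unfolding A_def
      by (subst set_integral_finite_Union)
         (use disj Lb LB Lint in \<open>auto simp: sum_distrib_left s2 disjoint_family_on_def\<close>)
    also have "\<dots> \<le> (\<Sum>k<n. measure m1 (L k))" by (intro sum_mono Lk)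
    also have "\<dots> = measure m1 (A n)" unfolding A_def
      using disj Lb by (subst m1.finite_measure_finite_Union) (auto simp: s1 disjoint_family_on_def)
    also have "\<dots> \<le> measure m1 B" using LB Bb unfolding A_def
      by (intro m1.finite_measure_mono) (auto simp: s1)
    finally show ?thesis .
  qed
  have "(\<lambda>n. c * r * (LINT y:A n|m2. v y)) \<longlonglongrightarrow> c * r * (LINT y:B|m2. v y)"
    by (intro tendsto_mult_left lim)
  then show ?thesis using part by (intro LIMSEQ_le_const2) auto
qed

locale cdset =
  fixes M :: "'a measure" and X Y :: "'a \<Rightarrow> real" and s :: "real \<Rightarrow> real"
  assumes P: "prob_space M" and Xm[measurable]: "X \<in> borel_measurable M"
    and Ym[measurable]: "Y \<in> borel_measurable M"
    and Ypos: "\<forall>\<omega>\<in>space M. Y \<omega> > 0" and Fpos: "\<forall>x. tail M X x > 0"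
    and CDa: "CD M X Y s"
begin

interpretation prob_space M by (fact P)

lemma tail_antimono: "x \<le> x' \<Longrightarrow> tail M X x' \<le> tail M X x"
  unfolding tail_def by (rule finite_measure_mono[rotated]) (measurable, auto)

lemma tail_le1: "tail M X x \<le> 1"
  unfolding tail_def by simp

lemma tail_meas[measurable]: "tail M X \<in> borel_measurable borel"
proof -
  have "mono (\<lambda>x. - tail M X x)" by (rule monoI) (simp add: tail_antimono)
  then have "(\<lambda>x. - tail M X x) \<in> borel_measurable borel" by (rule borel_measurable_mono)
  then have "(\<lambda>x. - (- tail M X x)) \<in> borel_measurable borel" by measurable
  then show ?thesis by simp
qed

lemma s_pos: "y \<ge> 0 \<Longrightarrow> s y > 0"
  using CDa unfolding CD_def by auto

lemma DY_pos: "y \<in> DY M Y \<Longrightarrow> y > 0"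
  unfolding DY_def by auto

lemma cond_ratio_bounds: "0 \<le> cond_ratio M X Y x y t \<and> cond_ratio M X Y x y t \<le> 1"
proof -
  have "measure M {\<omega> \<in> space M. X \<omega> > x \<and> Y \<omega> \<in> {y..<y+t}} \<le> measure M {\<omega> \<in> space M. Y \<omega> \<in> {y..<y+t}}"
    by (rule finite_measure_mono[rotated]) (measurable, auto)
  then show ?thesis unfolding cond_ratio_def
    by (cases "measure M {\<omega> \<in> space M. Y \<omega> \<in> {y..<y+t}} = 0") (auto simp: divide_le_eq_1 less_le)
qed

lemma cond_tail_lim: "y \<in> DY M Y \<Longrightarrow> (cond_ratio M X Y x y \<longlongrightarrow> cond_tail M X Y x y) (at_right 0)"
proof -
  assume y: "y \<in> DY M Y"
  then obtain p where p: "(cond_ratio M X Y x y \<longlongrightarrow> p) (at_right 0)"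
    using CDa unfolding CD_def by blast
  then have "cond_tail M X Y x y = p" unfolding cond_tail_def
    by (intro tendsto_Lim) (simp_all add: trivial_limit_at_right_real)
  with p show ?thesis by simp
qed

lemma cond_tail_le1: "y \<in> DY M Y \<Longrightarrow> cond_tail M X Y x y \<le> 1"
  by (rule tendsto_upperbound[OF cond_tail_lim]) (auto simp: cond_ratio_bounds trivial_limit_at_right_real)

lemma CD_eps:
  assumes e: "e > 0"
  shows "\<exists>x0. \<forall>x\<ge>x0. \<forall>y\<in>DY M Y. (1-e) * (tail M X x * s y) \<le> cond_tail M X Y x y \<and>
                cond_tail M X Y x y \<le> (1+e) * (tail M X x * s y)"
proof -
  from CDa e have "eventually (\<lambda>x. \<forall>y \<in> DY M Y.
         \<bar>cond_tail M X Y x y / (tail M X x * s y) - 1\<bar> \<le> e) at_top"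
    unfolding CD_def by blast
  then obtain x0 where x0: "\<And>x. x \<ge> x0 \<Longrightarrow> \<forall>y \<in> DY M Y. \<bar>cond_tail M X Y x y / (tail M X x * s y) - 1\<bar> \<le> e"
    by (auto simp: eventually_at_top_linorder)
  show ?thesis
  proof (intro exI allI impI ballI)
    fix x y assume x: "x \<ge> x0" and y: "y \<in> DY M Y"
    define b where "b = tail M X x * s y"
    define a where "a = cond_tail M X Y x y"
    have b: "b > 0" unfolding b_def using Fpos s_pos[of y] DY_pos[OF y] by simp
    have ab: "\<bar>a / b - 1\<bar> \<le> e" using x0[OF x] y unfolding a_def b_def by blast
    have "a = (a / b) * b" using b by simp
    then have "(1 - e) * b \<le> a \<and> a \<le> (1 + e) * b" using ab b
      by (smt (verit, best) mult_right_mono)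
    then show "(1-e) * (tail M X x * s y) \<le> cond_tail M X Y x y \<and>
                cond_tail M X Y x y \<le> (1+e) * (tail M X x * s y)" unfolding a_def b_def by simp
  qed
qed

lemma s_bound: "\<exists>S0>0. \<forall>y\<in>DY M Y. s y \<le> S0"
proof -
  obtain x0 where x0: "\<forall>x\<ge>x0. \<forall>y\<in>DY M Y. (1-1/2) * (tail M X x * s y) \<le> cond_tail M X Y x y \<and>
                cond_tail M X Y x y \<le> (1+1/2) * (tail M X x * s y)"
    using CD_eps[of "1/2"] by auto
  show ?thesis
  proof (intro exI conjI ballI)
    show "2 / tail M X x0 > 0" using Fpos by simp
    fix y assume y: "y \<in> DY M Y"
    have "(1-1/2) * (tail M X x0 * s y) \<le> cond_tail M X Y x0 y" using x0 y by blast
    then have "(tail M X x0 * s y) / 2 \<le> cond_tail M X Y x0 y" by simp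
    then have "(1/2) * (tail M X x0 * s y) \<le> 1" using cond_tail_le1[OF y, of x0] by linarith
    then show "s y \<le> 2 / tail M X x0" using Fpos by (simp add: field_simps)
  qed
qed

definition Cset where "Cset = {y. \<forall>\<delta>>0. 0 < measure M {\<omega> \<in> space M. Y \<omega> \<in> {y-\<delta><..<y+\<delta>}}}"

lemma DY_eq: "DY M Y = {0<..} \<inter> Cset"
  unfolding DY_def Cset_def by auto

lemma Cset_closed: "closed Cset"
proof -
  have "open (- Cset)"
    unfolding open_dist
  proof (intro ballI)
    fix y assume "y \<in> - Cset"
    then obtain d where d: "d > 0" "\<not> 0 < measure M {\<omega> \<in> space M. Y \<omega> \<in> {y-d<..<y+d}}"
      unfolding Cset_def by auto
    show "\<exists>e>0. \<forall>y'. dist y' y < e \<longrightarrow> y' \<in> - Cset"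
    proof (intro exI conjI allI impI)
      show "d/2 > 0" using d by simp
      fix y' assume "dist y' y < d/2"
      then have "y - d/2 < y'" "y' < y + d/2" unfolding dist_real_def by linarith+
      then have sub: "{y'-d/2<..<y'+d/2} \<subseteq> {y-d<..<y+d}" by auto
      have "measure M {\<omega> \<in> space M. Y \<omega> \<in> {y'-d/2<..<y'+d/2}} \<le> measure M {\<omega> \<in> space M. Y \<omega> \<in> {y-d<..<y+d}}"
        by (rule finite_measure_mono[rotated]) (measurable, use sub in auto)
      with d have nz: "\<not> 0 < measure M {\<omega> \<in> space M. Y \<omega> \<in> {y'-d/2<..<y'+d/2}}" by linarith
      show "y' \<in> - Cset"
      proof
        assume "y' \<in> Cset"
        then have "0 < measure M {\<omega> \<in> space M. Y \<omega> \<in> {y'-d/2<..<y'+d/2}}"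
          unfolding Cset_def using \<open>d/2>0\<close> by blast
        with nz show False by blast
      qed
    qed
  qed
  then show ?thesis by (simp add: closed_def)
qed

lemma DY_borel[measurable]: "DY M Y \<in> sets borel"
  unfolding DY_eq using Cset_closed by (intro sets.Int) (auto intro: borel_closed)

lemma AE_DY: "AE \<omega> in M. Y \<omega> \<in> DY M Y"
proof -
  define Q where "Q = {pq \<in> \<rat> \<times> \<rat>. measure M {\<omega> \<in> space M. Y \<omega> \<in> {fst pq<..<snd pq}} = 0}"
  define N where "N pq = {\<omega> \<in> space M. Y \<omega> \<in> {fst pq<..<snd pq}}" for pq :: "real \<times> real"
  have cQ: "countable Q" unfolding Q_def
    by (rule countable_subset[of _ "\<rat> \<times> \<rat>"]) (auto intro: countable_rat)
  have null: "(\<Union>pq\<in>Q. N pq) \<in> null_sets M"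
  proof (rule null_sets_UN'[OF cQ])
    fix pq assume "pq \<in> Q"
    then show "N pq \<in> null_sets M" unfolding Q_def N_def
      by (auto simp: null_sets_def emeasure_eq_measure)
  qed
  show ?thesis
  proof (rule AE_I'[OF null], safe)
    fix \<omega> assume \<omega>: "\<omega> \<in> space M" "Y \<omega> \<notin> DY M Y"
    define y where "y = Y \<omega>"
    have "y > 0" using Ypos \<omega> unfolding y_def by auto
    then obtain d where d: "d > 0" "\<not> 0 < measure M {\<omega> \<in> space M. Y \<omega> \<in> {y-d<..<y+d}}"
      using \<omega> unfolding y_def DY_def by auto
    obtain p where p: "p \<in> \<rat>" "y - d < p" "p < y" using Rats_dense_in_real[of "y-d" y] d by auto
    obtain q where q: "q \<in> \<rat>" "y < q" "q < y + d" using Rats_dense_in_real[of y "y+d"] d by auto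
    have "measure M {\<omega> \<in> space M. Y \<omega> \<in> {p<..<q}} \<le> measure M {\<omega> \<in> space M. Y \<omega> \<in> {y-d<..<y+d}}"
      by (rule finite_measure_mono[rotated]) (measurable, use p q in auto)
    with d have "measure M {\<omega> \<in> space M. Y \<omega> \<in> {p<..<q}} = 0" by (smt (verit) measure_nonneg)
    then have "(p, q) \<in> Q" unfolding Q_def using p q by auto
    moreover have "\<omega> \<in> N (p, q)" unfolding N_def using \<omega> p q y_def by auto
    ultimately show "\<omega> \<in> (\<Union>pq\<in>Q. N pq)" by blast
  qed
qed

end

context cdset begin

interpretation prob_space M by (fact P)

definition s0 :: "real \<Rightarrow> real" where "s0 y = indicator {0..} y * s y"

lemma s0_meas[measurable]: "s0 \<in> borel_measurable borel"
proof -
  have "s \<in> borel_measurable (restrict_space borel {0..})" using CDa unfolding CD_def by blast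
  then have "(\<lambda>x. indicator {0..} x *\<^sub>R s x) \<in> borel_measurable borel"
    by (subst borel_measurable_restrict_space_iff[symmetric]) auto
  then show ?thesis unfolding s0_def by simp
qed

lemma s0_eq: "y > 0 \<Longrightarrow> s0 y = s y"
  unfolding s0_def by simp

lemma sY_meas[measurable]: "(\<lambda>\<omega>. s (Y \<omega>)) \<in> borel_measurable M"
proof -
  have "(\<lambda>\<omega>. s0 (Y \<omega>)) \<in> borel_measurable M" by measurable
  then show ?thesis
    by (rule measurable_cong[THEN iffD1, rotated]) (use Ypos in \<open>auto simp: s0_eq\<close>)
qed

lemma num_le: "measure M {\<omega> \<in> space M. X \<omega> > w \<and> Y \<omega> \<in> {y..<y+t}}
   \<le> cond_ratio M X Y w y t * measure M {\<omega> \<in> space M. Y \<omega> \<in> {y..<y+t}}"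
proof (cases "measure M {\<omega> \<in> space M. Y \<omega> \<in> {y..<y+t}} = 0")
  case True
  have "measure M {\<omega> \<in> space M. X \<omega> > w \<and> Y \<omega> \<in> {y..<y+t}} \<le> measure M {\<omega> \<in> space M. Y \<omega> \<in> {y..<y+t}}"
    by (rule finite_measure_mono[rotated]) (measurable, auto)
  with True show ?thesis by simp
next
  case False
  then show ?thesis unfolding cond_ratio_def by simp
qed

lemma num_eq: "measure M {\<omega> \<in> space M. Y \<omega> \<in> {y..<y+t}} \<noteq> 0 \<Longrightarrow>
   measure M {\<omega> \<in> space M. X \<omega> > w \<and> Y \<omega> \<in> {y..<y+t}}
   = cond_ratio M X Y w y t * measure M {\<omega> \<in> space M. Y \<omega> \<in> {y..<y+t}}"
  unfolding cond_ratio_def by simp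

lemma pick_t:
  assumes ev: "eventually P (at_right (0::real))" and d: "d > 0"
  shows "\<exists>t>0. t < d \<and> P t"
proof -
  from ev have "\<exists>b>(0::real). \<forall>y>0. y < b \<longrightarrow> P y"
    by (simp add: eventually_at_right[OF zero_less_one])
  then obtain b where b: "b > 0" "\<And>t. t > 0 \<Longrightarrow> t < b \<Longrightarrow> P t" by blast
  define t where "t = min b d / 2"
  have "t > 0" "t < b" "t < d" using b d unfolding t_def by auto
  with b show ?thesis by blast
qed

definition msel :: "real \<Rightarrow> real measure" where
  "msel x = distr M borel (\<lambda>\<omega>. if X \<omega> * Y \<omega> > x then Y \<omega> else 0)"

definition mY :: "real measure" where "mY = distr M borel Y"

lemma msel_facts: "finite_measure (msel x)" "sets (msel x) = sets borel"
proof -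
  have "prob_space (msel x)" unfolding msel_def by (rule prob_space_distr) measurable
  then show "finite_measure (msel x)" unfolding prob_space_def by blast
  show "sets (msel x) = sets borel" unfolding msel_def by simp
qed

lemma mY_facts: "finite_measure mY" "sets mY = sets borel"
proof -
  have "prob_space mY" unfolding mY_def by (rule prob_space_distr) measurable
  then show "finite_measure mY" unfolding prob_space_def by blast
  show "sets mY = sets borel" unfolding mY_def by simp
qed

lemma measure_msel:
  assumes Sb: "S \<in> sets borel" and S0: "S \<subseteq> {0<..}"
  shows "measure (msel x) S = measure M {\<omega> \<in> space M. X \<omega> * Y \<omega> > x \<and> Y \<omega> \<in> S}"
proof -
  have f: "(\<lambda>\<omega>. if X \<omega> * Y \<omega> > x then Y \<omega> else 0) \<in> measurable M borel" by measurable
  have "measure (msel x) S = measure M ((\<lambda>\<omega>. if X \<omega> * Y \<omega> > x then Y \<omega> else 0) -` S \<inter> space M)"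
    unfolding msel_def by (rule measure_distr[OF f Sb])
  also have "(\<lambda>\<omega>. if X \<omega> * Y \<omega> > x then Y \<omega> else 0) -` S \<inter> space M = {\<omega> \<in> space M. X \<omega> * Y \<omega> > x \<and> Y \<omega> \<in> S}"
    using S0 by (auto split: if_splits)
  finally show ?thesis .
qed

lemma measure_mY:
  assumes Sb: "S \<in> sets borel"
  shows "measure mY S = measure M {\<omega> \<in> space M. Y \<omega> \<in> S}"
proof -
  have "measure mY S = measure M (Y -` S \<inter> space M)"
    unfolding mY_def by (rule measure_distr[OF Ym Sb])
  also have "Y -` S \<inter> space M = {\<omega> \<in> space M. Y \<omega> \<in> S}" by auto
  finally show ?thesis .
qed

lemma int_mY:
  fixes f :: "real \<Rightarrow> real" and S :: "real set"
  assumes f: "f \<in> borel_measurable borel" and Sb: "S \<in> sets borel"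
  shows "(LINT y:S|mY. f y) = (\<integral>\<omega>. indicator S (Y \<omega>) * f (Y \<omega>) \<partial>M)"
proof -
  have g: "(\<lambda>y. indicator S y *\<^sub>R f y) \<in> borel_measurable borel"
    using f Sb by (intro borel_measurable_scaleR borel_measurable_indicator) auto
  show ?thesis
    unfolding mY_def set_lebesgue_integral_def integral_distr[OF Ym g] by simp
qed

lemma aux1:
  fixes x y q a b :: real
  assumes "x > 0" "0 < b" "b < q * y" "a * b > x" "y > 0" "q > 0"
  shows "a > x / (q * y)"
proof -
  have "x / b < a" using assms by (simp add: divide_less_eq mult.commute)
  moreover have "x / (q * y) < x / b" using assms by (intro divide_strict_left_mono) auto
  ultimately show ?thesis by linarith
qed

lemma aux2:
  fixes x y a b :: real
  assumes "x > 0" "y > 0" "y \<le> b" "a > x / y"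
  shows "a * b > x"
proof -
  have "a > 0" using assms by (smt (verit) divide_pos_pos)
  have "x / b \<le> x / y" using assms by (intro divide_left_mono) auto
  then have "a > x / b" using assms by linarith
  then show ?thesis using assms by (simp add: divide_less_eq)
qed

lemma B_facts:
  shows "{y\<in>DY M Y. y \<le> T} \<in> sets borel" "{y\<in>DY M Y. y \<le> T} \<subseteq> {0<..}"
proof -
  have "{y\<in>DY M Y. y \<le> T} = DY M Y \<inter> {..T}" by auto
  then show "{y\<in>DY M Y. y \<le> T} \<in> sets borel" using DY_borel by auto
  show "{y\<in>DY M Y. y \<le> T} \<subseteq> {0<..}" using DY_pos by auto
qed

lemma Ico_sub: "(y::real) > 0 \<Longrightarrow> {y..<y+t} \<subseteq> {0<..}" by auto

lemma disint_upper:
  assumes e: "e > 0" and r: "0 < r" "r < 1" and q: "q > 1"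
    and x0: "\<forall>x\<ge>x0. \<forall>y\<in>DY M Y. cond_tail M X Y x y \<le> (1+e) * (tail M X x * s y)"
    and x: "x > 0" and T: "T > 0" and xT: "x / (q*T) \<ge> x0"
  shows "measure M {\<omega>\<in>space M. X \<omega> * Y \<omega> > x \<and> Y \<omega> \<in> {y\<in>DY M Y. y \<le> T}}
      \<le> (1+2*e)/r * (\<integral>\<omega>. indicator {y\<in>DY M Y. y \<le> T} (Y \<omega>) * (tail M X (x/(q*Y \<omega>)) * s (Y \<omega>)) \<partial>M)"
proof -
  obtain S0 where S0: "S0 > 0" "\<forall>y\<in>DY M Y. s y \<le> S0" using s_bound by blast
  define B where "B = {y\<in>DY M Y. y \<le> T}"
  have Bb: "B \<in> sets borel" and Bpos: "B \<subseteq> {0<..}" unfolding B_def using B_facts by auto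
  define v where "v y = tail M X (x/(q*y)) * s0 y" for y
  have vm: "v \<in> borel_measurable borel" unfolding v_def by measurable
  have vpos: "\<forall>y\<in>B. 0 < v y \<and> v y \<le> S0"
  proof
    fix y assume y: "y \<in> B"
    then have y0: "y > 0" and yD: "y \<in> DY M Y" using Bpos unfolding B_def by auto
    have "s y > 0" "s y \<le> S0" using s_pos[of y] y0 S0 yD by auto
    moreover have "tail M X (x/(q*y)) > 0" "tail M X (x/(q*y)) \<le> 1" using Fpos tail_le1 by auto
    ultimately show "0 < v y \<and> v y \<le> S0" unfolding v_def s0_eq[OF y0]
      by (auto intro: mult_le_one order.trans[OF mult_right_mono[of _ 1]])
  qed
  have c: "1 + 2*e \<ge> 0" using e by simp
  have hyp: "\<forall>y\<in>B. \<forall>\<delta>>0. \<exists>t>0. t < \<delta> \<and> measure (msel x) {y..<y+t} \<le> (1+2*e) * v y * measure mY {y..<y+t}"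
  proof (intro ballI allI impI)
    fix y \<delta> :: real assume y: "y \<in> B" and d: "\<delta> > 0"
    then have y0: "y > 0" and yD: "y \<in> DY M Y" and yT: "y \<le> T" using Bpos unfolding B_def by auto
    define w where "w = x / (q*y)"
    have "x / (q*T) \<le> w" unfolding w_def using x q y0 yT by (intro divide_left_mono) auto
    then have wx0: "w \<ge> x0" using xT by linarith
    have ct: "cond_tail M X Y w y \<le> (1+e) * (tail M X w * s y)" using x0 wx0 yD by blast
    have pos: "tail M X w * s y > 0" using Fpos s_pos[of y] y0 by simp
    have vy: "v y = tail M X w * s y" unfolding v_def w_def s0_eq[OF y0] ..
    have "(1+e) * (tail M X w * s y) < (1+2*e) * (tail M X w * s y)"
      using pos e by (intro mult_strict_right_mono) auto
    then have "cond_tail M X Y w y < (1+2*e) * v y" using ct unfolding vy by linarith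
    then have ev: "eventually (\<lambda>t. cond_ratio M X Y w y t < (1+2*e) * v y) (at_right 0)"
      using order_tendstoD(2)[OF cond_tail_lim[OF yD]] by blast
    have dpos: "min \<delta> ((q-1)*y) > 0" using d q y0 by simp
    obtain t where t: "t > 0" "t < min \<delta> ((q-1)*y)" "cond_ratio M X Y w y t < (1+2*e) * v y"
      using pick_t[OF ev dpos] by blast
    have "measure (msel x) {y..<y+t} = measure M {\<omega>\<in>space M. X \<omega> * Y \<omega> > x \<and> Y \<omega> \<in> {y..<y+t}}"
      by (rule measure_msel) (use y0 in auto)
    also have "\<dots> \<le> measure M {\<omega>\<in>space M. X \<omega> > w \<and> Y \<omega> \<in> {y..<y+t}}"
    proof (rule finite_measure_mono[rotated])
      show "{\<omega>\<in>space M. X \<omega> > w \<and> Y \<omega> \<in> {y..<y+t}} \<in> sets M" by measurable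
      show "{\<omega>\<in>space M. X \<omega> * Y \<omega> > x \<and> Y \<omega> \<in> {y..<y+t}} \<subseteq> {\<omega>\<in>space M. X \<omega> > w \<and> Y \<omega> \<in> {y..<y+t}}"
      proof safe
        fix \<omega> assume om: "\<omega> \<in> space M" "X \<omega> * Y \<omega> > x" "Y \<omega> \<in> {y..<y+t}"
        have "Y \<omega> < q * y" using om t by (auto simp: algebra_simps)
        then show "X \<omega> > w" unfolding w_def using aux1[of x "Y \<omega>" q y "X \<omega>"] om x y0 q Ypos by auto
      qed
    qed
    also have "\<dots> \<le> cond_ratio M X Y w y t * measure M {\<omega>\<in>space M. Y \<omega> \<in> {y..<y+t}}" by (rule num_le)
    also have "\<dots> \<le> (1+2*e) * v y * measure M {\<omega>\<in>space M. Y \<omega> \<in> {y..<y+t}}"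
      using t by (intro mult_right_mono) auto
    also have "measure M {\<omega>\<in>space M. Y \<omega> \<in> {y..<y+t}} = measure mY {y..<y+t}"
      by (rule measure_mY[symmetric]) simp
    finally show "\<exists>t>0. t < \<delta> \<and> measure (msel x) {y..<y+t} \<le> (1+2*e) * v y * measure mY {y..<y+t}"
      using t by (intro exI[of _ t]) auto
  qed
  have main: "measure (msel x) B \<le> (1+2*e) / r * (LINT y:B|mY. v y)"
    by (rule sum_upper[OF msel_facts(1) mY_facts(1) msel_facts(2) mY_facts(2) Bb vm vpos r c hyp])
  have "measure (msel x) B = measure M {\<omega>\<in>space M. X \<omega> * Y \<omega> > x \<and> Y \<omega> \<in> B}"
    by (rule measure_msel[OF Bb Bpos])
  moreover have "(LINT y:B|mY. v y) = (\<integral>\<omega>. indicator B (Y \<omega>) * v (Y \<omega>) \<partial>M)"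
    by (rule int_mY[OF vm Bb])
  moreover have "(\<integral>\<omega>. indicator B (Y \<omega>) * v (Y \<omega>) \<partial>M) = (\<integral>\<omega>. indicator B (Y \<omega>) * (tail M X (x/(q*Y \<omega>)) * s (Y \<omega>)) \<partial>M)"
    unfolding v_def by (rule Bochner_Integration.integral_cong) (use Ypos s0_eq in auto)
  ultimately show ?thesis using main unfolding B_def by simp
qed

lemma disint_lower:
  assumes e: "e > 0" "e < 1/2" and r: "0 < r" "r < 1" and q: "q > 1"
    and x0: "\<forall>x\<ge>x0. \<forall>y\<in>DY M Y. (1-e) * (tail M X x * s y) \<le> cond_tail M X Y x y"
    and x: "x > 0" and T: "T > 0" and xT: "x / (q*T) \<ge> x0"
  shows "(1-2*e) * r * (\<integral>\<omega>. indicator {y\<in>DY M Y. y \<le> T} (Y \<omega>) * (tail M X (x/Y \<omega>) * s (Y \<omega>)) \<partial>M)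
      \<le> measure M {\<omega>\<in>space M. X \<omega> * Y \<omega> > x \<and> Y \<omega> \<in> {y\<in>DY M Y. y \<le> T}}"
proof -
  obtain S0 where S0: "S0 > 0" "\<forall>y\<in>DY M Y. s y \<le> S0" using s_bound by blast
  define B where "B = {y\<in>DY M Y. y \<le> T}"
  have Bb: "B \<in> sets borel" and Bpos: "B \<subseteq> {0<..}" unfolding B_def using B_facts by auto
  define v where "v y = tail M X (x/y) * s0 y" for y
  have vm: "v \<in> borel_measurable borel" unfolding v_def by measurable
  have vpos: "\<forall>y\<in>B. 0 < v y \<and> v y \<le> S0"
  proof
    fix y assume y: "y \<in> B"
    then have y0: "y > 0" and yD: "y \<in> DY M Y" using Bpos unfolding B_def by auto
    have "s y > 0" "s y \<le> S0" using s_pos[of y] y0 S0 yD by auto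
    moreover have "tail M X (x/y) > 0" "tail M X (x/y) \<le> 1" using Fpos tail_le1 by auto
    ultimately show "0 < v y \<and> v y \<le> S0" unfolding v_def s0_eq[OF y0]
      by (auto intro: mult_le_one order.trans[OF mult_right_mono[of _ 1]])
  qed
  have c: "1 - 2*e > 0" using e by simp
  have hyp: "\<forall>y\<in>B. \<forall>\<delta>>0. \<exists>t>0. t < \<delta> \<and> (1-2*e) * v y * measure mY {y..<y+t} \<le> measure (msel x) {y..<y+t}"
  proof (intro ballI allI impI)
    fix y \<delta> :: real assume y: "y \<in> B" and d: "\<delta> > 0"
    then have y0: "y > 0" and yD: "y \<in> DY M Y" and yT: "y \<le> T" using Bpos unfolding B_def by auto
    define w where "w = x / y"
    have "x / (q*T) \<le> x / (q*y)" using x q y0 yT by (intro divide_left_mono) auto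
    also have "x / (q*y) \<le> x / y" using x q y0 by (intro divide_left_mono) auto
    finally have wx0: "w \<ge> x0" using xT unfolding w_def by linarith
    have ct: "(1-e) * (tail M X w * s y) \<le> cond_tail M X Y w y" using x0 wx0 yD by blast
    have pos: "tail M X w * s y > 0" using Fpos s_pos[of y] y0 by simp
    have vy: "v y = tail M X w * s y" unfolding v_def w_def s0_eq[OF y0] ..
    have "(1-2*e) * (tail M X w * s y) < (1-e) * (tail M X w * s y)"
      using pos e by (intro mult_strict_right_mono) auto
    then have "(1-2*e) * v y < cond_tail M X Y w y" using ct unfolding vy by linarith
    then have ev: "eventually (\<lambda>t. (1-2*e) * v y < cond_ratio M X Y w y t) (at_right 0)"
      using order_tendstoD(1)[OF cond_tail_lim[OF yD]] by blast
    obtain t where t: "t > 0" "t < \<delta>" "(1-2*e) * v y < cond_ratio M X Y w y t"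
      using pick_t[OF ev d] by blast
    have cvpos: "(1-2*e) * v y > 0" using c vpos y by simp
    have den: "measure M {\<omega>\<in>space M. Y \<omega> \<in> {y..<y+t}} \<noteq> 0"
    proof
      assume "measure M {\<omega>\<in>space M. Y \<omega> \<in> {y..<y+t}} = 0"
      then have "cond_ratio M X Y w y t = 0" unfolding cond_ratio_def by simp
      with t cvpos show False by simp
    qed
    have "(1-2*e) * v y * measure mY {y..<y+t} = (1-2*e) * v y * measure M {\<omega>\<in>space M. Y \<omega> \<in> {y..<y+t}}"
      by (subst measure_mY) simp_all
    also have "\<dots> \<le> cond_ratio M X Y w y t * measure M {\<omega>\<in>space M. Y \<omega> \<in> {y..<y+t}}"
      using t by (intro mult_right_mono) auto
    also have "\<dots> = measure M {\<omega>\<in>space M. X \<omega> > w \<and> Y \<omega> \<in> {y..<y+t}}"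
      by (rule num_eq[OF den, symmetric])
    also have "\<dots> \<le> measure M {\<omega>\<in>space M. X \<omega> * Y \<omega> > x \<and> Y \<omega> \<in> {y..<y+t}}"
    proof (rule finite_measure_mono[rotated])
      show "{\<omega>\<in>space M. X \<omega> * Y \<omega> > x \<and> Y \<omega> \<in> {y..<y+t}} \<in> sets M" by measurable
      show "{\<omega>\<in>space M. X \<omega> > w \<and> Y \<omega> \<in> {y..<y+t}} \<subseteq> {\<omega>\<in>space M. X \<omega> * Y \<omega> > x \<and> Y \<omega> \<in> {y..<y+t}}"
      proof safe
        fix \<omega> assume om: "\<omega> \<in> space M" "X \<omega> > w" "Y \<omega> \<in> {y..<y+t}"
        then show "X \<omega> * Y \<omega> > x" unfolding w_def using aux2[of x y "Y \<omega>" "X \<omega>"] x y0 by auto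
      qed
    qed
    also have "\<dots> = measure (msel x) {y..<y+t}"
      by (rule measure_msel[symmetric]) (use y0 in auto)
    finally show "\<exists>t>0. t < \<delta> \<and> (1-2*e) * v y * measure mY {y..<y+t} \<le> measure (msel x) {y..<y+t}"
      using t by (intro exI[of _ t]) auto
  qed
  have main: "(1-2*e) * r * (LINT y:B|mY. v y) \<le> measure (msel x) B"
    by (rule sum_lower[OF msel_facts(1) mY_facts(1) msel_facts(2) mY_facts(2) Bb vm vpos r c hyp])
  have "measure (msel x) B = measure M {\<omega>\<in>space M. X \<omega> * Y \<omega> > x \<and> Y \<omega> \<in> B}"
    by (rule measure_msel[OF Bb Bpos])
  moreover have "(LINT y:B|mY. v y) = (\<integral>\<omega>. indicator B (Y \<omega>) * v (Y \<omega>) \<partial>M)"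
    by (rule int_mY[OF vm Bb])
  moreover have "(\<integral>\<omega>. indicator B (Y \<omega>) * v (Y \<omega>) \<partial>M) = (\<integral>\<omega>. indicator B (Y \<omega>) * (tail M X (x/Y \<omega>) * s (Y \<omega>)) \<partial>M)"
    unfolding v_def by (rule Bochner_Integration.integral_cong) (use Ypos s0_eq in auto)
  ultimately show ?thesis using main unfolding B_def by simp
qed

end

context cdset begin

interpretation prob_space M by (fact P)

lemma RV_at:
  assumes RV: "regvar_tail (tail M X) \<alpha>" and c: "c > 0"
  shows "((\<lambda>x. tail M X (x * c) / tail M X x) \<longlongrightarrow> c powr (-\<alpha>)) at_top"
  using RV c unfolding regvar_tail_def by blast

lemma dct:
  assumes RV: "regvar_tail (tail M X) \<alpha>"
    and p: "1 \<le> p" "p \<le> q"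
    and T: "filterlim T at_top at_top" and Dint: "integrable M D"
    and Dnn: "\<forall>\<omega>\<in>space M. D \<omega> \<ge> 0"
    and Db: "eventually (\<lambda>x. \<forall>\<omega>\<in>space M. Y \<omega> \<in> DY M Y \<longrightarrow> Y \<omega> \<le> T x \<longrightarrow>
               tail M X (x/(q*Y \<omega>)) / tail M X x * s (Y \<omega>) \<le> D \<omega>) at_top"
  shows "((\<lambda>x. (\<integral>\<omega>. indicator {y\<in>DY M Y. y \<le> T x} (Y \<omega>) * (tail M X (x/(p*Y \<omega>)) * s (Y \<omega>)) \<partial>M) / tail M X x)
           \<longlongrightarrow> p powr \<alpha> * (\<integral>\<omega>. Y \<omega> powr \<alpha> * s (Y \<omega>) \<partial>M)) at_top"
proof -
  define g where "g x \<omega> = indicator {y\<in>DY M Y. y \<le> T x} (Y \<omega>) * (tail M X (x/(p*Y \<omega>)) * s (Y \<omega>)) / tail M X x" for x \<omega>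
  define f where "f \<omega> = p powr \<alpha> * (Y \<omega> powr \<alpha> * s (Y \<omega>))" for \<omega>
  have eq: "(\<integral>\<omega>. indicator {y\<in>DY M Y. y \<le> T x} (Y \<omega>) * (tail M X (x/(p*Y \<omega>)) * s (Y \<omega>)) \<partial>M) / tail M X x
      = integral\<^sup>L M (g x)" for x
    unfolding g_def by simp
  have Bm: "{y\<in>DY M Y. y \<le> T x} \<in> sets borel" for x using B_facts(1) by blast
  have gm: "g x \<in> borel_measurable M" for x
  proof -
    have "(\<lambda>\<omega>. indicator {y\<in>DY M Y. y \<le> T x} (Y \<omega>) :: real) \<in> borel_measurable M"
      using Bm[of x] by (intro borel_measurable_indicator' measurable_compose[OF Ym]) auto
    then show ?thesis unfolding g_def by measurable
  qed
  have fm: "f \<in> borel_measurable M" unfolding f_def by measurable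
  have lim: "AE \<omega> in M. ((\<lambda>x. g x \<omega>) \<longlongrightarrow> f \<omega>) at_top"
    using AE_DY
  proof (eventually_elim)
    case (elim \<omega>)
    define y where "y = Y \<omega>"
    have y0: "y > 0" using DY_pos elim unfolding y_def by auto
    have ev1: "eventually (\<lambda>x. T x \<ge> y) at_top" using T by (simp add: filterlim_at_top)
    have "((\<lambda>x. tail M X (x * (1/(p*y))) / tail M X x) \<longlongrightarrow> (1/(p*y)) powr (-\<alpha>)) at_top"
      by (rule RV_at[OF RV]) (use y0 p in simp)
    moreover have "(1/(p*y)) powr (-\<alpha>) = p powr \<alpha> * y powr \<alpha>"
      using y0 p by (simp add: powr_minus_divide powr_mult powr_divide)
    ultimately have L: "((\<lambda>x. tail M X (x/(p*y)) / tail M X x) \<longlongrightarrow> p powr \<alpha> * y powr \<alpha>) at_top"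
      by (simp add: divide_inverse)
    have "((\<lambda>x. tail M X (x/(p*y)) / tail M X x * s y) \<longlongrightarrow> p powr \<alpha> * y powr \<alpha> * s y) at_top"
      by (intro tendsto_mult L tendsto_const)
    moreover have "eventually (\<lambda>x. tail M X (x/(p*y)) / tail M X x * s y = g x \<omega>) at_top"
      using ev1
    proof eventually_elim
      case (elim x)
      then show ?case unfolding g_def y_def[symmetric] using \<open>Y \<omega> \<in> DY M Y\<close> y_def by simp
    qed
    ultimately have "((\<lambda>x. g x \<omega>) \<longlongrightarrow> p powr \<alpha> * y powr \<alpha> * s y) at_top"
      by (rule Lim_transform_eventually)
    then show ?case unfolding f_def y_def by (simp add: mult.assoc)
  qed
  have bound: "eventually (\<lambda>x. AE \<omega> in M. norm (g x \<omega>) \<le> D \<omega>) at_top"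
    using Db eventually_gt_at_top[of "0::real"]
  proof eventually_elim
    case (elim x)
    show ?case
    proof (rule AE_I2)
      fix \<omega> assume om: "\<omega> \<in> space M"
      have y0: "Y \<omega> > 0" using Ypos om by auto
      show "norm (g x \<omega>) \<le> D \<omega>"
      proof (cases "Y \<omega> \<in> DY M Y \<and> Y \<omega> \<le> T x")
        case True
        have sp: "s (Y \<omega>) > 0" using s_pos y0 by simp
        have Fp: "tail M X x > 0" using Fpos by simp
        have "x/(q*Y \<omega>) \<le> x/(p*Y \<omega>)" using p y0 elim by (intro divide_left_mono mult_right_mono) auto
        then have mono: "tail M X (x/(p*Y \<omega>)) \<le> tail M X (x/(q*Y \<omega>))" by (rule tail_antimono)
        have "norm (g x \<omega>) = tail M X (x/(p*Y \<omega>)) / tail M X x * s (Y \<omega>)"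
          unfolding g_def using True Fpos[rule_format, of x] Fpos[rule_format, of "x/(p*Y \<omega>)"] sp by (simp add: abs_mult)
        also have "\<dots> \<le> tail M X (x/(q*Y \<omega>)) / tail M X x * s (Y \<omega>)"
          using mono Fp sp by (intro mult_right_mono divide_right_mono) auto
        also have "\<dots> \<le> D \<omega>" using elim om True by blast
        finally show ?thesis .
      next
        case False
        then show ?thesis unfolding g_def using Dnn om by auto
      qed
    qed
  qed
  have "((\<lambda>x. integral\<^sup>L M (g x)) \<longlongrightarrow> integral\<^sup>L M f) at_top"
    by (rule integral_dominated_convergence_at_top[OF fm gm Dint lim bound])
  moreover have "integral\<^sup>L M f = p powr \<alpha> * (\<integral>\<omega>. Y \<omega> powr \<alpha> * s (Y \<omega>) \<partial>M)"
    unfolding f_def by simp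
  ultimately show ?thesis unfolding eq by simp
qed

lemma measure_DYc: "measure M {\<omega>\<in>space M. Y \<omega> \<notin> DY M Y} = 0"
proof -
  have "{\<omega>\<in>space M. Y \<omega> \<notin> DY M Y} \<in> sets M" by measurable
  moreover have "AE \<omega> in M. \<omega> \<notin> {\<omega>\<in>space M. Y \<omega> \<notin> DY M Y}" using AE_DY by eventually_elim auto
  ultimately show ?thesis using prob_eq_0 by blast
qed

lemma split_bound:
  "measure M {\<omega>\<in>space M. X \<omega> * Y \<omega> > x}
    \<le> measure M {\<omega>\<in>space M. X \<omega> * Y \<omega> > x \<and> Y \<omega> \<in> {y\<in>DY M Y. y \<le> T}} + tail M Y T"
proof -
  let ?A = "{\<omega>\<in>space M. X \<omega> * Y \<omega> > x \<and> Y \<omega> \<in> {y\<in>DY M Y. y \<le> T}}"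
  let ?B = "{\<omega>\<in>space M. Y \<omega> > T}"
  let ?C = "{\<omega>\<in>space M. Y \<omega> \<notin> DY M Y}"
  have Am: "?A \<in> sets M" by measurable
  have Bm: "?B \<in> sets M" by measurable
  have Cm: "?C \<in> sets M" by measurable
  have "measure M {\<omega>\<in>space M. X \<omega> * Y \<omega> > x} \<le> measure M ((?A \<union> ?B) \<union> ?C)"
    by (rule finite_measure_mono[rotated]) (use Am Bm Cm in auto)
  also have "\<dots> \<le> measure M (?A \<union> ?B) + measure M ?C"
    by (rule measure_Un_le) (use Am Bm Cm in auto)
  also have "\<dots> \<le> measure M ?A + measure M ?B + measure M ?C"
    using measure_Un_le[OF Am Bm] by simp
  finally show ?thesis unfolding measure_DYc tail_def by simp
qed

lemma sub_bound:
  "measure M {\<omega>\<in>space M. X \<omega> * Y \<omega> > x \<and> Y \<omega> \<in> {y\<in>DY M Y. y \<le> T}} \<le> measure M {\<omega>\<in>space M. X \<omega> * Y \<omega> > x}"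
  by (rule finite_measure_mono[rotated]) (measurable, auto)

lemma core:
  assumes RV: "regvar_tail (tail M X) \<alpha>"
    and dom: "\<forall>q>1. \<forall>x0. \<exists>T D. filterlim T at_top at_top \<and>
        eventually (\<lambda>x. x > 0 \<and> T x > 0 \<and> x/(q*T x) \<ge> x0) at_top \<and>
        ((\<lambda>x. tail M Y (T x) / tail M X x) \<longlongrightarrow> 0) at_top \<and> integrable M D \<and> (\<forall>\<omega>\<in>space M. D \<omega> \<ge> 0) \<and>
        eventually (\<lambda>x. \<forall>\<omega>\<in>space M. Y \<omega> \<in> DY M Y \<longrightarrow> Y \<omega> \<le> T x \<longrightarrow>
               tail M X (x/(q*Y \<omega>)) / tail M X x * s (Y \<omega>) \<le> D \<omega>) at_top"
  shows "((\<lambda>x. measure M {\<omega>\<in>space M. X \<omega> * Y \<omega> > x} / tail M X x)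
           \<longlongrightarrow> (\<integral>\<omega>. Y \<omega> powr \<alpha> * s (Y \<omega>) \<partial>M)) at_top"
proof (rule order_tendstoI)
  define E where "E = (\<integral>\<omega>. Y \<omega> powr \<alpha> * s (Y \<omega>) \<partial>M)"
  fix a assume aE: "a > (\<integral>\<omega>. Y \<omega> powr \<alpha> * s (Y \<omega>) \<partial>M)"
  then have aE: "a > E" unfolding E_def .
  define h where "h \<delta> = (1+2*\<delta>)/(1-\<delta>) * ((1+\<delta>) powr \<alpha> * E)" for \<delta> :: real
  have "(h \<longlongrightarrow> (1+2*0)/(1-0) * ((1+0) powr \<alpha> * E)) (at_right 0)"
    unfolding h_def by (intro tendsto_intros) auto
  then have "(h \<longlongrightarrow> E) (at_right 0)" by simp
  then have ev: "eventually (\<lambda>\<delta>. h \<delta> < a) (at_right 0)" using aE order_tendstoD(2) by blast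
  obtain \<delta> where d: "\<delta> > 0" "\<delta> < 1/2" "h \<delta> < a" using pick_t[OF ev, of "1/2"] by auto
  define e where "e = \<delta>"
  define r where "r = 1 - \<delta>"
  define q where "q = 1 + \<delta>"
  have e: "e > 0" "e < 1/2" and r: "0 < r" "r < 1" and q: "q > 1" using d unfolding e_def r_def q_def by auto
  obtain x0 where x0: "\<forall>x\<ge>x0. \<forall>y\<in>DY M Y. (1-e) * (tail M X x * s y) \<le> cond_tail M X Y x y \<and>
                cond_tail M X Y x y \<le> (1+e) * (tail M X x * s y)" using CD_eps[OF e(1)] by blast
  then have x0u: "\<forall>x\<ge>x0. \<forall>y\<in>DY M Y. cond_tail M X Y x y \<le> (1+e) * (tail M X x * s y)" by blast
  obtain T D where T: "filterlim T at_top at_top"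
    and evT: "eventually (\<lambda>x. x > 0 \<and> T x > 0 \<and> x/(q*T x) \<ge> x0) at_top"
    and tl: "((\<lambda>x. tail M Y (T x) / tail M X x) \<longlongrightarrow> 0) at_top"
    and Dint: "integrable M D" and Dnn: "\<forall>\<omega>\<in>space M. D \<omega> \<ge> 0"
    and Db: "eventually (\<lambda>x. \<forall>\<omega>\<in>space M. Y \<omega> \<in> DY M Y \<longrightarrow> Y \<omega> \<le> T x \<longrightarrow>
               tail M X (x/(q*Y \<omega>)) / tail M X x * s (Y \<omega>) \<le> D \<omega>) at_top"
    using dom q by blast
  define I where "I x = (\<integral>\<omega>. indicator {y\<in>DY M Y. y \<le> T x} (Y \<omega>) * (tail M X (x/(q*Y \<omega>)) * s (Y \<omega>)) \<partial>M)" for x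
  have IL: "((\<lambda>x. I x / tail M X x) \<longlongrightarrow> q powr \<alpha> * E) at_top"
    unfolding I_def E_def using q by (intro dct[OF RV _ order_refl T Dint Dnn Db]) auto
  have "((\<lambda>x. (1+2*e)/r * (I x / tail M X x) + tail M Y (T x) / tail M X x) \<longlongrightarrow> (1+2*e)/r * (q powr \<alpha> * E) + 0) at_top"
    by (intro tendsto_intros IL tl)
  moreover have "(1+2*e)/r * (q powr \<alpha> * E) + 0 = h \<delta>" unfolding h_def e_def r_def q_def by simp
  ultimately have ev2: "eventually (\<lambda>x. (1+2*e)/r * (I x / tail M X x) + tail M Y (T x) / tail M X x < a) at_top"
    using d(3) order_tendstoD(2) by metis
  show "eventually (\<lambda>x. measure M {\<omega>\<in>space M. X \<omega> * Y \<omega> > x} / tail M X x < a) at_top"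
    using ev2 evT
  proof eventually_elim
    case (elim x)
    have Fp: "tail M X x > 0" using Fpos by simp
    have "measure M {\<omega>\<in>space M. X \<omega> * Y \<omega> > x}
      \<le> measure M {\<omega>\<in>space M. X \<omega> * Y \<omega> > x \<and> Y \<omega> \<in> {y\<in>DY M Y. y \<le> T x}} + tail M Y (T x)"
      by (rule split_bound)
    also have "\<dots> \<le> (1+2*e)/r * I x + tail M Y (T x)"
      using disint_upper[OF e(1) r q x0u] elim unfolding I_def by auto
    finally have "measure M {\<omega>\<in>space M. X \<omega> * Y \<omega> > x} / tail M X x \<le> ((1+2*e)/r * I x + tail M Y (T x)) / tail M X x"
      using Fp by (simp add: divide_right_mono)
    also have "\<dots> = (1+2*e)/r * (I x / tail M X x) + tail M Y (T x) / tail M X x"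
      by (simp add: add_divide_distrib)
    finally show ?case using elim by linarith
  qed
next
  define E where "E = (\<integral>\<omega>. Y \<omega> powr \<alpha> * s (Y \<omega>) \<partial>M)"
  fix a assume aE: "a < (\<integral>\<omega>. Y \<omega> powr \<alpha> * s (Y \<omega>) \<partial>M)"
  then have aE: "a < E" unfolding E_def .
  define h where "h \<delta> = (1-2*\<delta>) * (1-\<delta>) * E" for \<delta> :: real
  have "(h \<longlongrightarrow> (1-2*0) * (1-0) * E) (at_right 0)"
    unfolding h_def by (intro tendsto_intros)
  then have "(h \<longlongrightarrow> E) (at_right 0)" by simp
  then have ev: "eventually (\<lambda>\<delta>. a < h \<delta>) (at_right 0)" using aE order_tendstoD(1) by blast
  obtain \<delta> where d: "\<delta> > 0" "\<delta> < 1/2" "a < h \<delta>" using pick_t[OF ev, of "1/2"] by auto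
  define e where "e = \<delta>"
  define r where "r = 1 - \<delta>"
  define q where "q = (2::real)"
  have e: "e > 0" "e < 1/2" and r: "0 < r" "r < 1" and q: "q > 1" using d unfolding e_def r_def q_def by auto
  obtain x0 where x0: "\<forall>x\<ge>x0. \<forall>y\<in>DY M Y. (1-e) * (tail M X x * s y) \<le> cond_tail M X Y x y \<and>
                cond_tail M X Y x y \<le> (1+e) * (tail M X x * s y)" using CD_eps[OF e(1)] by blast
  then have x0l: "\<forall>x\<ge>x0. \<forall>y\<in>DY M Y. (1-e) * (tail M X x * s y) \<le> cond_tail M X Y x y" by blast
  obtain T D where T: "filterlim T at_top at_top"
    and evT: "eventually (\<lambda>x. x > 0 \<and> T x > 0 \<and> x/(q*T x) \<ge> x0) at_top"
    and Dint: "integrable M D" and Dnn: "\<forall>\<omega>\<in>space M. D \<omega> \<ge> 0"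
    and Db: "eventually (\<lambda>x. \<forall>\<omega>\<in>space M. Y \<omega> \<in> DY M Y \<longrightarrow> Y \<omega> \<le> T x \<longrightarrow>
               tail M X (x/(q*Y \<omega>)) / tail M X x * s (Y \<omega>) \<le> D \<omega>) at_top"
    using dom q by blast
  define J where "J x = (\<integral>\<omega>. indicator {y\<in>DY M Y. y \<le> T x} (Y \<omega>) * (tail M X (x/(1*Y \<omega>)) * s (Y \<omega>)) \<partial>M)" for x
  have JL: "((\<lambda>x. J x / tail M X x) \<longlongrightarrow> 1 powr \<alpha> * E) at_top"
    unfolding J_def E_def using q by (intro dct[OF RV _ _ T Dint Dnn Db]) auto
  have "((\<lambda>x. (1-2*e) * r * (J x / tail M X x)) \<longlongrightarrow> (1-2*e) * r * (1 powr \<alpha> * E)) at_top"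
    by (intro tendsto_intros JL)
  moreover have "(1-2*e) * r * (1 powr \<alpha> * E) = h \<delta>" unfolding h_def e_def r_def by simp
  ultimately have ev2: "eventually (\<lambda>x. a < (1-2*e) * r * (J x / tail M X x)) at_top"
    using d(3) order_tendstoD(1) by metis
  show "eventually (\<lambda>x. a < measure M {\<omega>\<in>space M. X \<omega> * Y \<omega> > x} / tail M X x) at_top"
    using ev2 evT
  proof eventually_elim
    case (elim x)
    have Fp: "tail M X x > 0" using Fpos by simp
    have "(1-2*e) * r * J x \<le> measure M {\<omega>\<in>space M. X \<omega> * Y \<omega> > x \<and> Y \<omega> \<in> {y\<in>DY M Y. y \<le> T x}}"
      using disint_lower[OF e r q x0l] elim unfolding J_def by auto
    also have "\<dots> \<le> measure M {\<omega>\<in>space M. X \<omega> * Y \<omega> > x}" by (rule sub_bound)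
    finally have "(1-2*e) * r * J x / tail M X x \<le> measure M {\<omega>\<in>space M. X \<omega> * Y \<omega> > x} / tail M X x"
      using Fp by (simp add: divide_right_mono)
    then show ?case using elim by simp
  qed
qed

end

context cdset begin

interpretation prob_space M by (fact P)

lemma Fx_pos: "tail M X x > 0" using Fpos by simp

lemma potter:
  assumes RV: "regvar_tail (tail M X) \<alpha>" and b: "\<beta> > \<alpha>" and a: "\<alpha> \<ge> 0"
  shows "\<exists>x1>0. \<forall>x z. z \<ge> 1 \<longrightarrow> x / z \<ge> x1 \<longrightarrow> tail M X (x/z) \<le> (2*z) powr \<beta> * tail M X x"
proof -
  have lim: "((\<lambda>u. tail M X (u * 2) / tail M X u) \<longlongrightarrow> 2 powr (-\<alpha>)) at_top"
    by (rule RV_at[OF RV]) simp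
  have "2 powr (-\<beta>) < 2 powr (-\<alpha>)" using b by (intro powr_less_mono) auto
  then have "eventually (\<lambda>u. 2 powr (-\<beta>) < tail M X (u * 2) / tail M X u) at_top"
    using order_tendstoD(1)[OF lim] by blast
  then obtain x1' where x1': "\<And>u. u \<ge> x1' \<Longrightarrow> 2 powr (-\<beta>) < tail M X (u * 2) / tail M X u"
    by (auto simp: eventually_at_top_linorder)
  define x1 where "x1 = max x1' 1"
  have x1: "x1 > 0" unfolding x1_def by simp
  have step: "tail M X u \<le> 2 powr \<beta> * tail M X (u * 2)" if u: "u \<ge> x1" for u
  proof -
    have "2 powr (-\<beta>) < tail M X (u * 2) / tail M X u" using x1' u unfolding x1_def by auto
    then have "2 powr (-\<beta>) * tail M X u < tail M X (u * 2)" using Fx_pos[of u] by (simp add: field_simps)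
    then have "2 powr \<beta> * (2 powr (-\<beta>) * tail M X u) \<le> 2 powr \<beta> * tail M X (u * 2)"
      by (intro mult_left_mono) auto
    moreover have "2 powr \<beta> * (2 powr (-\<beta>) * tail M X u) = tail M X u"
      by (simp add: powr_minus field_simps)
    ultimately show ?thesis by simp
  qed
  have iter: "\<forall>u\<ge>x1. tail M X u \<le> (2 powr \<beta>)^n * tail M X (u * 2^n)" for n :: nat
  proof (induction n)
    case 0 then show ?case by simp
  next
    case (Suc n)
    show ?case
    proof (intro allI impI)
      fix u assume u: "u \<ge> x1"
      have "u * 2^n \<ge> x1" using u x1 by (smt (verit) mult_le_cancel_left1 one_le_power)
      then have "tail M X (u * 2^n) \<le> 2 powr \<beta> * tail M X (u * 2^n * 2)" by (rule step)
      then have B: "(2 powr \<beta>)^n * tail M X (u * 2^n) \<le> (2 powr \<beta>)^n * (2 powr \<beta> * tail M X (u * 2^n * 2))"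
        by (intro mult_left_mono) auto
      have A: "tail M X u \<le> (2 powr \<beta>)^n * tail M X (u * 2^n)" using Suc.IH u by blast
      have C: "(2 powr \<beta>)^n * (2 powr \<beta> * tail M X (u * 2^n * 2)) = (2 powr \<beta>)^Suc n * tail M X (u * 2^Suc n)"
        by (simp add: algebra_simps)
      from A B C show "tail M X u \<le> (2 powr \<beta>)^Suc n * tail M X (u * 2^Suc n)" by linarith
    qed
  qed
  show ?thesis
  proof (intro exI[of _ x1] conjI allI impI x1)
    fix x z :: real assume z: "z \<ge> 1" and xz: "x / z \<ge> x1"
    have xpos: "x > 0" using xz x1 z by (smt (verit) divide_nonpos_pos)
    define n where "n = nat \<lceil>log 2 z\<rceil>"
    have lz: "log 2 z \<ge> 0" using z by simp
    have n1: "real n \<ge> log 2 z" unfolding n_def using lz by linarith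
    have n2: "real n < log 2 z + 1" unfolding n_def using lz by linarith
    have "z = 2 powr (log 2 z)" using z by simp
    also have "\<dots> \<le> 2 powr (real n)" using n1 by (intro powr_mono) auto
    finally have zn: "z \<le> 2^n" by (simp add: powr_realpow)
    have "2 powr (real n) < 2 powr (log 2 z + 1)" using n2 by (intro powr_less_mono) auto
    also have "\<dots> = 2 * z" using z by (simp add: powr_add)
    finally have zn2: "2^n < 2 * z" by (simp add: powr_realpow)
    have "tail M X (x/z) \<le> (2 powr \<beta>)^n * tail M X (x/z * 2^n)" using iter xz by blast
    also have "tail M X (x/z * 2^n) \<le> tail M X x"
    proof (rule tail_antimono)
      have "x/z * z \<le> x/z * 2^n" using zn xpos z by (intro mult_left_mono) auto
      then show "x \<le> x/z * 2^n" using z by simp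
    qed
    then have "(2 powr \<beta>)^n * tail M X (x/z * 2^n) \<le> (2 powr \<beta>)^n * tail M X x"
      by (intro mult_left_mono) auto
    also have "(2 powr \<beta>)^n = (2^n) powr \<beta>"
      by (simp add: powr_realpow[symmetric] powr_powr mult.commute)
    also have "(2^n) powr \<beta> * tail M X x \<le> (2*z) powr \<beta> * tail M X x"
    proof (intro mult_right_mono)
      show "((2::real)^n) powr \<beta> \<le> (2*z) powr \<beta>"
        using zn2 b a by (intro powr_mono2) auto
    qed (simp add: less_imp_le Fx_pos)
    finally show "tail M X (x/z) \<le> (2*z) powr \<beta> * tail M X x" .
  qed
qed

lemma tail_ratio_compose:
  assumes hYo: "(\<lambda>u. tail M Y (h u)) \<in> o[at_top](tail M X)"
    and T: "filterlim T at_top at_top"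
    and R: "((\<lambda>x. tail M X (T x) / tail M X x) \<longlongrightarrow> c) at_top"
  shows "((\<lambda>x. tail M Y (h (T x)) / tail M X x) \<longlongrightarrow> 0) at_top"
proof -
  have f1: "((\<lambda>u. tail M Y (h u) / tail M X u) \<longlongrightarrow> 0) at_top" by (rule smalloD_tendsto[OF hYo])
  have "((\<lambda>x. tail M Y (h (T x)) / tail M X (T x)) \<longlongrightarrow> 0) at_top"
    using filterlim_compose[OF f1 T] by simp
  then have lim: "((\<lambda>x. tail M Y (h (T x)) / tail M X (T x) * (tail M X (T x) / tail M X x)) \<longlongrightarrow> 0 * c) at_top"
    by (intro tendsto_mult R)
  have eq: "(\<lambda>x. tail M Y (h (T x)) / tail M X (T x) * (tail M X (T x) / tail M X x)) = (\<lambda>x. tail M Y (h (T x)) / tail M X x)"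
  proof
    fix x show "tail M Y (h (T x)) / tail M X (T x) * (tail M X (T x) / tail M X x) = tail M Y (h (T x)) / tail M X x"
      using Fx_pos[of "T x"] by (simp add: field_simps)
  qed
  show ?thesis using lim unfolding eq mult_zero_left .
qed

lemma case_i_dom:
  assumes RV: "regvar_tail (tail M X) \<alpha>" and a: "\<alpha> \<ge> 0" and ep: "\<epsilon> > 0"
    and hYo: "tail M Y \<in> o[at_top](tail M X)"
    and int: "integrable M (\<lambda>\<omega>. Y \<omega> powr (\<alpha> + \<epsilon>) * s (Y \<omega>))"
  shows "\<forall>q>1. \<forall>x0. \<exists>T D. filterlim T at_top at_top \<and>
        eventually (\<lambda>x. x > 0 \<and> T x > 0 \<and> x/(q*T x) \<ge> x0) at_top \<and>
        ((\<lambda>x. tail M Y (T x) / tail M X x) \<longlongrightarrow> 0) at_top \<and> integrable M D \<and> (\<forall>\<omega>\<in>space M. D \<omega> \<ge> 0) \<and>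
        eventually (\<lambda>x. \<forall>\<omega>\<in>space M. Y \<omega> \<in> DY M Y \<longrightarrow> Y \<omega> \<le> T x \<longrightarrow>
               tail M X (x/(q*Y \<omega>)) / tail M X x * s (Y \<omega>) \<le> D \<omega>) at_top"
proof (intro allI impI)
  fix q x0 :: real assume q: "q > 1"
  define \<beta> where "\<beta> = \<alpha> + \<epsilon>"
  have b: "\<beta> > \<alpha>" "\<beta> \<ge> 0" using ep a unfolding \<beta>_def by auto
  obtain x1 where x1: "x1 > 0" "\<forall>x z. z \<ge> 1 \<longrightarrow> x / z \<ge> x1 \<longrightarrow> tail M X (x/z) \<le> (2*z) powr \<beta> * tail M X x"
    using potter[OF RV b(1) a] by blast
  obtain S0 where S0: "S0 > 0" "\<forall>y\<in>DY M Y. s y \<le> S0" using s_bound by blast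
  define K where "K = q * max (max x0 x1) 1"
  have K: "K > 0" "K / q \<ge> x0" "K / q \<ge> x1" using q unfolding K_def by auto
  define T where "T x = x / K" for x
  define D where "D \<omega> = S0 + (2*q) powr \<beta> * (Y \<omega> powr \<beta> * s (Y \<omega>))" for \<omega>
  have Tlim: "filterlim T at_top at_top"
    unfolding filterlim_at_top
  proof
    fix Z :: real
    show "eventually (\<lambda>x. Z \<le> T x) at_top"
      using eventually_ge_at_top[of "Z * K"] by eventually_elim (use K in \<open>simp add: T_def pos_le_divide_eq\<close>)
  qed
  have evT: "eventually (\<lambda>x. x > 0 \<and> T x > 0 \<and> x/(q*T x) \<ge> x0) at_top"
    using eventually_gt_at_top[of "0::real"]
  proof eventually_elim
    case (elim x)
    have "x/(q*T x) = K / q" unfolding T_def using elim K q by (simp add: field_simps)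
    then show ?case using elim K unfolding T_def by simp
  qed
  have tl: "((\<lambda>x. tail M Y (T x) / tail M X x) \<longlongrightarrow> 0) at_top"
  proof (rule tail_ratio_compose[where h="\<lambda>u. u", OF _ Tlim])
    show "(\<lambda>u. tail M Y u) \<in> o[at_top](tail M X)" using hYo by simp
    have "((\<lambda>x. tail M X (x * (1/K)) / tail M X x) \<longlongrightarrow> (1/K) powr (-\<alpha>)) at_top"
      by (rule RV_at[OF RV]) (use K in simp)
    then show "((\<lambda>x. tail M X (T x) / tail M X x) \<longlongrightarrow> (1/K) powr (-\<alpha>)) at_top"
      unfolding T_def by simp
  qed
  have Dint: "integrable M D" unfolding D_def using int unfolding \<beta>_def
    by (intro Bochner_Integration.integrable_add Bochner_Integration.integrable_mult_right) auto
  have Dnn: "\<forall>\<omega>\<in>space M. D \<omega> \<ge> 0"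
  proof
    fix \<omega> assume "\<omega> \<in> space M"
    then have "s (Y \<omega>) > 0" using Ypos s_pos by (simp add: less_imp_le)
    then show "D \<omega> \<ge> 0" unfolding D_def using S0 by (intro add_nonneg_nonneg mult_nonneg_nonneg) auto
  qed
  have Db: "eventually (\<lambda>x. \<forall>\<omega>\<in>space M. Y \<omega> \<in> DY M Y \<longrightarrow> Y \<omega> \<le> T x \<longrightarrow>
               tail M X (x/(q*Y \<omega>)) / tail M X x * s (Y \<omega>) \<le> D \<omega>) at_top"
    using eventually_gt_at_top[of "0::real"]
  proof eventually_elim
    case (elim x)
    show ?case
    proof (intro ballI impI)
      fix \<omega> assume om: "\<omega> \<in> space M" and yD: "Y \<omega> \<in> DY M Y" and yT: "Y \<omega> \<le> T x"
      define y where "y = Y \<omega>"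
      have y0: "y > 0" using Ypos om unfolding y_def by auto
      have sy: "s y > 0" "s y \<le> S0" using s_pos[of y] y0 S0 yD unfolding y_def by auto
      have Fp: "tail M X x > 0" by (rule Fx_pos)
      have D2: "(2*q) powr \<beta> * (y powr \<beta> * s y) \<ge> 0" using sy by simp
      show "tail M X (x/(q*Y \<omega>)) / tail M X x * s (Y \<omega>) \<le> D \<omega>"
      proof (cases "q * y \<le> 1")
        case True
        have "x * (q*y) \<le> x * 1" using True elim by (intro mult_left_mono) auto
        then have "x \<le> x/(q*y)" using y0 q by (simp add: le_divide_eq)
        then have "tail M X (x/(q*y)) \<le> tail M X x" by (rule tail_antimono)
        then have "tail M X (x/(q*y)) / tail M X x \<le> 1" using Fp by simp
        then have "tail M X (x/(q*y)) / tail M X x * s y \<le> 1 * s y" using sy by (intro mult_right_mono) auto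
        then show ?thesis unfolding D_def y_def[symmetric] using sy D2 by linarith
      next
        case False
        have "q * y \<le> q * (x / K)" using yT q unfolding T_def y_def by (intro mult_left_mono) auto
        then have "x / (q * (x/K)) \<le> x/(q*y)" using elim y0 q K by (intro divide_left_mono) auto
        moreover have "x / (q * (x/K)) = K / q" using elim K q by (simp add: field_simps)
        ultimately have "x/(q*y) \<ge> x1" using K by linarith
        then have "tail M X (x/(q*y)) \<le> (2*(q*y)) powr \<beta> * tail M X x"
          using x1(2) False by auto
        then have "tail M X (x/(q*y)) / tail M X x \<le> (2*(q*y)) powr \<beta>" using Fp by (simp add: divide_le_eq)
        also have "(2*(q*y)) powr \<beta> = (2*q) powr \<beta> * y powr \<beta>" using q y0 by (simp add: powr_mult mult.assoc)
        finally have "tail M X (x/(q*y)) / tail M X x * s y \<le> (2*q) powr \<beta> * y powr \<beta> * s y"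
          using sy by (intro mult_right_mono) auto
        then show ?thesis unfolding D_def y_def[symmetric] using S0 by (simp add: mult.assoc)
      qed
    qed
  qed
  show "\<exists>T D. filterlim T at_top at_top \<and>
        eventually (\<lambda>x. x > 0 \<and> T x > 0 \<and> x/(q*T x) \<ge> x0) at_top \<and>
        ((\<lambda>x. tail M Y (T x) / tail M X x) \<longlongrightarrow> 0) at_top \<and> integrable M D \<and> (\<forall>\<omega>\<in>space M. D \<omega> \<ge> 0) \<and>
        eventually (\<lambda>x. \<forall>\<omega>\<in>space M. Y \<omega> \<in> DY M Y \<longrightarrow> Y \<omega> \<le> T x \<longrightarrow>
               tail M X (x/(q*Y \<omega>)) / tail M X x * s (Y \<omega>) \<le> D \<omega>) at_top"
    using Tlim evT tl Dint Dnn Db by blast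
qed

lemma case_i_int:
  assumes a: "\<alpha> \<ge> 0" and ep: "\<epsilon> > 0"
    and int: "integrable M (\<lambda>\<omega>. Y \<omega> powr (\<alpha> + \<epsilon>) * s (Y \<omega>))"
  shows "integrable M (\<lambda>\<omega>. Y \<omega> powr \<alpha> * s (Y \<omega>))"
proof -
  obtain S0 where S0: "S0 > 0" "\<forall>y\<in>DY M Y. s y \<le> S0" using s_bound by blast
  show ?thesis
  proof (rule Bochner_Integration.integrable_bound[where f="\<lambda>\<omega>. S0 + Y \<omega> powr (\<alpha> + \<epsilon>) * s (Y \<omega>)"])
    show "integrable M (\<lambda>\<omega>. S0 + Y \<omega> powr (\<alpha> + \<epsilon>) * s (Y \<omega>))" using int by (intro Bochner_Integration.integrable_add) auto
    show "(\<lambda>\<omega>. Y \<omega> powr \<alpha> * s (Y \<omega>)) \<in> borel_measurable M" by measurable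
    show "AE \<omega> in M. norm (Y \<omega> powr \<alpha> * s (Y \<omega>)) \<le> norm (S0 + Y \<omega> powr (\<alpha> + \<epsilon>) * s (Y \<omega>))"
      using AE_DY
    proof (eventually_elim)
      case (elim \<omega>)
      define y where "y = Y \<omega>"
      have y0: "y > 0" using DY_pos elim unfolding y_def by auto
      have sy: "s y > 0" "s y \<le> S0" using s_pos[of y] y0 S0 elim unfolding y_def by auto
      have nn: "y powr (\<alpha> + \<epsilon>) * s y \<ge> 0" using sy by simp
      have "y powr \<alpha> * s y \<le> S0 + y powr (\<alpha> + \<epsilon>) * s y"
      proof (cases "y \<le> 1")
        case True
        have "y powr \<alpha> \<le> 1 powr \<alpha>" using True y0 a by (intro powr_mono2) auto
        then have "y powr \<alpha> \<le> 1" by simp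
        then have "y powr \<alpha> * s y \<le> 1 * s y" using sy by (intro mult_right_mono) auto
        then show ?thesis using sy nn by linarith
      next
        case False
        have "y powr \<alpha> \<le> y powr (\<alpha> + \<epsilon>)" using False ep by (intro powr_mono) auto
        then have "y powr \<alpha> * s y \<le> y powr (\<alpha> + \<epsilon>) * s y" using sy by (intro mult_right_mono) auto
        then show ?thesis using S0 by linarith
      qed
      then show ?case unfolding y_def[symmetric] using sy nn S0 by simp
    qed
  qed
qed

end

lemma ratio_bound:
  fixes Fu Fx Lu Lx u x y \<alpha> C :: real
  assumes pos: "Fu > 0" "Fx > 0" "Lu > 0" "Lx > 0" "x > 0" "y > 0"
    and u: "u = x / y"
    and b1: "Fu < 2 * (u powr (-\<alpha>) * Lu)" and b2: "Fx > 1/2 * (x powr (-\<alpha>) * Lx)"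
    and LC: "Lu / Lx \<le> C"
  shows "Fu / Fx \<le> 4 * C * y powr \<alpha>"
proof -
  have up: "u > 0" using u pos by simp
  have A: "u powr (-\<alpha>) * Lu > 0" "x powr (-\<alpha>) * Lx > 0" using up pos by auto
  have "Fu / Fx \<le> (2 * (u powr (-\<alpha>) * Lu)) / (1/2 * (x powr (-\<alpha>) * Lx))"
    using b1 b2 pos A by (intro frac_le) auto
  also have "\<dots> = 4 * ((u powr (-\<alpha>) / x powr (-\<alpha>)) * (Lu / Lx))"
    using A pos by (simp add: field_simps)
  also have "u powr (-\<alpha>) / x powr (-\<alpha>) = y powr \<alpha>"
    using pos unfolding u by (simp add: powr_divide powr_minus field_simps)
  also have "4 * (y powr \<alpha> * (Lu / Lx)) \<le> 4 * (y powr \<alpha> * C)"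
    using LC by (intro mult_left_mono) auto
  finally show ?thesis by (simp add: mult_ac)
qed

context cdset begin

interpretation prob_space M by (fact P)

lemma lim_div_q: "(q::real) > 0 \<Longrightarrow> filterlim (\<lambda>x. x / q) at_top at_top"
  unfolding filterlim_at_top
proof
  fix Z :: real assume q: "q > 0"
  show "eventually (\<lambda>x. Z \<le> x / q) at_top"
    using eventually_ge_at_top[of "Z * q"] by eventually_elim (use q in \<open>simp add: pos_le_divide_eq\<close>)
qed

lemma case_ii_dom:
  fixes L g :: "real \<Rightarrow> real"
  assumes RV: "regvar_tail (tail M X) \<alpha>" and a: "\<alpha> \<ge> 0"
    and Lpos: "\<forall>x>0. L x > 0"
    and asym: "tail M X \<sim>[at_top] (\<lambda>x. x powr (-\<alpha>) * L x)"
    and gpos: "\<forall>x\<ge>0. g x > 0" and glim: "(g \<longlongrightarrow> 0) at_top"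
    and xg: "filterlim (\<lambda>x. x * g x) at_top at_top"
    and hYg: "(\<lambda>x. tail M Y (x * g x)) \<in> o[at_top](tail M X)"
    and hL: "eventually (\<lambda>x. \<forall>y\<in>{1..x * g x}. L (x / y) / L x \<le> C) at_top"
    and Eint: "integrable M (\<lambda>\<omega>. Y \<omega> powr \<alpha> * s (Y \<omega>))"
  shows "\<forall>q>1. \<forall>x0. \<exists>T D. filterlim T at_top at_top \<and>
        eventually (\<lambda>x. x > 0 \<and> T x > 0 \<and> x/(q*T x) \<ge> x0) at_top \<and>
        ((\<lambda>x. tail M Y (T x) / tail M X x) \<longlongrightarrow> 0) at_top \<and> integrable M D \<and> (\<forall>\<omega>\<in>space M. D \<omega> \<ge> 0) \<and>
        eventually (\<lambda>x. \<forall>\<omega>\<in>space M. Y \<omega> \<in> DY M Y \<longrightarrow> Y \<omega> \<le> T x \<longrightarrow>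
               tail M X (x/(q*Y \<omega>)) / tail M X x * s (Y \<omega>) \<le> D \<omega>) at_top"
proof (intro allI impI)
  fix q x0 :: real assume q: "q > 1"
  obtain S0 where S0: "S0 > 0" "\<forall>y\<in>DY M Y. s y \<le> S0" using s_bound by blast
  define T where "T x = (x/q) * g (x/q)" for x
  define C' where "C' = \<bar>C\<bar>"
  define D where "D \<omega> = 2 * q powr \<alpha> * (S0 + 4 * C' * (Y \<omega> powr \<alpha> * s (Y \<omega>)))" for \<omega>
  have limq: "filterlim (\<lambda>x. x / q) at_top at_top" using lim_div_q q by simp
  have Tlim: "filterlim T at_top at_top"
    unfolding T_def using filterlim_compose[OF xg limq] by simp
  have gev: "eventually (\<lambda>u. 0 < g u) at_top"
    using eventually_ge_at_top[of "0::real"] by eventually_elim (use gpos in auto)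
  have ig: "filterlim (\<lambda>u. inverse (g u)) at_top at_top"
    by (rule filterlim_inverse_at_top[OF glim gev])
  have igq: "filterlim (\<lambda>x. inverse (g (x/q))) at_top at_top"
    using filterlim_compose[OF ig limq] by simp
  have evT: "eventually (\<lambda>x. x > 0 \<and> T x > 0 \<and> x/(q*T x) \<ge> x0) at_top"
    using eventually_gt_at_top[of "0::real"] igq[unfolded filterlim_at_top, rule_format, of x0]
  proof eventually_elim
    case (elim x)
    have gp: "g (x/q) > 0" using gpos elim q by auto
    have "x/(q*T x) = inverse (g (x/q))" unfolding T_def using elim q gp by (simp add: field_simps)
    then show ?case using elim gp q unfolding T_def by auto
  qed
  have Rq: "((\<lambda>x. tail M X (x/q) / tail M X x) \<longlongrightarrow> (1/q) powr (-\<alpha>)) at_top"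
  proof -
    have "((\<lambda>x. tail M X (x * (1/q)) / tail M X x) \<longlongrightarrow> (1/q) powr (-\<alpha>)) at_top"
      by (rule RV_at[OF RV]) (use q in simp)
    then show ?thesis by simp
  qed
  have qa: "(1/q) powr (-\<alpha>) = q powr \<alpha>" using q by (simp add: powr_minus_divide powr_divide)
  have tl: "((\<lambda>x. tail M Y (T x) / tail M X x) \<longlongrightarrow> 0) at_top"
    unfolding T_def by (rule tail_ratio_compose[where h="\<lambda>u. u * g u", OF hYg limq Rq])
  have Dint: "integrable M D" unfolding D_def using Eint
    by (intro Bochner_Integration.integrable_add Bochner_Integration.integrable_mult_right) auto
  have Dnn: "\<forall>\<omega>\<in>space M. D \<omega> \<ge> 0"
  proof
    fix \<omega> assume "\<omega> \<in> space M"
    then have "s (Y \<omega>) > 0" using Ypos s_pos by (simp add: less_imp_le)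
    then show "D \<omega> \<ge> 0" unfolding D_def C'_def using S0 by (intro mult_nonneg_nonneg add_nonneg_nonneg) auto
  qed
  have asr: "((\<lambda>u. tail M X u / (u powr (-\<alpha>) * L u)) \<longlongrightarrow> 1) at_top"
  proof (rule asymp_equivD_strong[OF asym])
    show "eventually (\<lambda>u. tail M X u \<noteq> 0 \<or> u powr (-\<alpha>) * L u \<noteq> 0) at_top"
      by (intro always_eventually allI) (metis Fx_pos less_irrefl)
  qed
  have "eventually (\<lambda>u. 1/2 < tail M X u / (u powr (-\<alpha>) * L u) \<and> tail M X u / (u powr (-\<alpha>) * L u) < 2) at_top"
    using order_tendstoD(1)[OF asr, of "1/2"] order_tendstoD(2)[OF asr, of 2] by (auto elim: eventually_elim2)
  then obtain u0' where u0': "\<And>u. u \<ge> u0' \<Longrightarrow> 1/2 < tail M X u / (u powr (-\<alpha>) * L u) \<and> tail M X u / (u powr (-\<alpha>) * L u) < 2"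
    by (auto simp: eventually_at_top_linorder)
  define u0 where "u0 = max u0' 1"
  have u0: "\<And>u. u \<ge> u0 \<Longrightarrow> tail M X u < 2 * (u powr (-\<alpha>) * L u) \<and> tail M X u > 1/2 * (u powr (-\<alpha>) * L u)"
  proof -
    fix u assume u: "u \<ge> u0"
    then have up: "u > 0" unfolding u0_def by simp
    have den: "u powr (-\<alpha>) * L u > 0" using up Lpos by simp
    from u0'[of u] u have "1/2 < tail M X u / (u powr (-\<alpha>) * L u) \<and> tail M X u / (u powr (-\<alpha>) * L u) < 2"
      unfolding u0_def by simp
    then show "tail M X u < 2 * (u powr (-\<alpha>) * L u) \<and> tail M X u > 1/2 * (u powr (-\<alpha>) * L u)"
      using den by (simp add: field_simps)
  qed
  have u0p: "u0 > 0" unfolding u0_def by simp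
  have E2: "eventually (\<lambda>x. x/q \<ge> u0) at_top" using limq by (simp add: filterlim_at_top)
  have E3: "eventually (\<lambda>x. inverse (g (x/q)) \<ge> u0) at_top" using igq by (simp add: filterlim_at_top)
  have E4: "eventually (\<lambda>x. \<forall>y\<in>{1..(x/q) * g (x/q)}. L ((x/q) / y) / L (x/q) \<le> C) at_top"
    using filterlim_iff[THEN iffD1, OF limq, rule_format, OF hL] by simp
  have "q powr \<alpha> < 2 * q powr \<alpha>" using q by simp
  then have E5: "eventually (\<lambda>x. tail M X (x/q) / tail M X x < 2 * q powr \<alpha>) at_top"
    using order_tendstoD(2)[OF Rq] qa by simp
  have Db: "eventually (\<lambda>x. \<forall>\<omega>\<in>space M. Y \<omega> \<in> DY M Y \<longrightarrow> Y \<omega> \<le> T x \<longrightarrow>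
               tail M X (x/(q*Y \<omega>)) / tail M X x * s (Y \<omega>) \<le> D \<omega>) at_top"
    using eventually_gt_at_top[of "0::real"] E2 E3 E4 E5
  proof eventually_elim
    case (elim x)
    define x' where "x' = x / q"
    have x'p: "x' > 0" unfolding x'_def using elim q by simp
    have Fx: "tail M X x > 0" "tail M X x' > 0" by (rule Fx_pos)+
    have gx: "g x' > 0" using gpos x'p by simp
    show ?case
    proof (intro ballI impI)
      fix \<omega> assume om: "\<omega> \<in> space M" and yD: "Y \<omega> \<in> DY M Y" and yT: "Y \<omega> \<le> T x"
      define y where "y = Y \<omega>"
      have y0: "y > 0" using Ypos om unfolding y_def by auto
      have sy: "s y > 0" "s y \<le> S0" using s_pos[of y] y0 S0 yD unfolding y_def by auto
      have xq: "x/(q*y) = x'/y" unfolding x'_def by simp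
      have split: "tail M X (x'/y) / tail M X x = (tail M X (x'/y) / tail M X x') * (tail M X x' / tail M X x)"
        using Fx by simp
      have r2: "tail M X x' / tail M X x \<le> 2 * q powr \<alpha>" using elim unfolding x'_def by simp
      have r2nn: "tail M X x' / tail M X x \<ge> 0" using Fx by simp
      have Dlow: "D \<omega> \<ge> 2 * q powr \<alpha> * S0" and Dlow2: "D \<omega> \<ge> 2 * q powr \<alpha> * (4 * C' * (y powr \<alpha> * s y))"
        unfolding D_def y_def[symmetric] C'_def using sy S0 by (auto intro!: mult_left_mono simp: algebra_simps)
      show "tail M X (x/(q*Y \<omega>)) / tail M X x * s (Y \<omega>) \<le> D \<omega>"
        unfolding y_def[symmetric] xq split
      proof (cases "y \<le> 1")
        case True
        have "x' \<le> x'/y" using True y0 x'p by (simp add: le_divide_eq mult_left_le)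
        then have "tail M X (x'/y) \<le> tail M X x'" by (rule tail_antimono)
        then have r1: "tail M X (x'/y) / tail M X x' \<le> 1" using Fx by simp
        have r1nn: "tail M X (x'/y) / tail M X x' \<ge> 0" using Fx_pos[of "x'/y"] Fx by simp
        have "(tail M X (x'/y) / tail M X x') * (tail M X x' / tail M X x) \<le> 1 * (2 * q powr \<alpha>)"
          by (rule mult_mono[OF r1 r2]) (use r2nn in simp_all)
        then have m1: "(tail M X (x'/y) / tail M X x') * (tail M X x' / tail M X x) \<le> 2 * q powr \<alpha>" by simp
        have "(tail M X (x'/y) / tail M X x') * (tail M X x' / tail M X x) * s y \<le> (2 * q powr \<alpha>) * S0"
          by (rule mult_mono[OF m1 sy(2)]) (use sy in simp_all)
        then show "(tail M X (x'/y) / tail M X x') * (tail M X x' / tail M X x) * s y \<le> D \<omega>" using Dlow by linarith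
      next
        case False
        have yT': "y \<le> x' * g x'" using yT unfolding T_def x'_def y_def by simp
        have "x' / (x' * g x') \<le> x'/y" using yT' y0 x'p by (intro divide_left_mono) auto
        moreover have "x' / (x' * g x') = inverse (g x')" using x'p gx by (simp add: field_simps)
        ultimately have uu0: "x'/y \<ge> u0" using elim unfolding x'_def by simp
        have x'u0: "x' \<ge> u0" using elim unfolding x'_def by simp
        have bu: "tail M X (x'/y) < 2 * ((x'/y) powr (-\<alpha>) * L (x'/y))" using u0[OF uu0] by simp
        have bx: "tail M X x' > 1/2 * (x' powr (-\<alpha>) * L x')" using u0[OF x'u0] by simp
        have yin: "y \<in> {1..x' * g x'}" using False yT' by simp
        have LC: "L (x'/y) / L x' \<le> C'" using elim yin unfolding x'_def C'_def by fastforce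
        have r1: "tail M X (x'/y) / tail M X x' \<le> 4 * C' * y powr \<alpha>"
          by (rule ratio_bound[OF Fx_pos Fx(2) _ _ x'p y0 refl bu bx LC])
             (use Lpos x'p y0 in auto)
        have r1nn: "tail M X (x'/y) / tail M X x' \<ge> 0" using Fx_pos[of "x'/y"] Fx by simp
        have "(tail M X (x'/y) / tail M X x') * (tail M X x' / tail M X x) \<le> (4 * C' * y powr \<alpha>) * (2 * q powr \<alpha>)"
          by (rule mult_mono[OF r1 r2]) (use r2nn C'_def in simp_all)
        then have "(tail M X (x'/y) / tail M X x') * (tail M X x' / tail M X x) * s y \<le> (4 * C' * y powr \<alpha>) * (2 * q powr \<alpha>) * s y"
          using sy by (intro mult_right_mono) auto
        also have "\<dots> = 2 * q powr \<alpha> * (4 * C' * (y powr \<alpha> * s y))" by (simp add: mult_ac)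
        finally show "(tail M X (x'/y) / tail M X x') * (tail M X x' / tail M X x) * s y \<le> D \<omega>" using Dlow2 by linarith
      qed
    qed
  qed
  show "\<exists>T D. filterlim T at_top at_top \<and>
        eventually (\<lambda>x. x > 0 \<and> T x > 0 \<and> x/(q*T x) \<ge> x0) at_top \<and>
        ((\<lambda>x. tail M Y (T x) / tail M X x) \<longlongrightarrow> 0) at_top \<and> integrable M D \<and> (\<forall>\<omega>\<in>space M. D \<omega> \<ge> 0) \<and>
        eventually (\<lambda>x. \<forall>\<omega>\<in>space M. Y \<omega> \<in> DY M Y \<longrightarrow> Y \<omega> \<le> T x \<longrightarrow>
               tail M X (x/(q*Y \<omega>)) / tail M X x * s (Y \<omega>) \<le> D \<omega>) at_top"
    using Tlim evT tl Dint Dnn Db by blast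
qed

end

theorem theorem2p1:
  fixes M :: "'a measure" and X Y :: "'a \<Rightarrow> real" and s L :: "real \<Rightarrow> real" and \<alpha> :: real
  assumes "prob_space M"
    and "X \<in> borel_measurable M" and "Y \<in> borel_measurable M"
    and "\<forall>\<omega>\<in>space M. Y \<omega> > 0"
    and "\<forall>x. tail M X x > 0"
    and "CD M X Y s"
    and "\<alpha> \<ge> 0" and "regvar_tail (tail M X) \<alpha>"
    and "\<forall>x>0. L x > 0" and "slowly_varying L"
    and "tail M X \<sim>[at_top] (\<lambda>x. x powr (-\<alpha>) * L x)"
    and "tail M Y \<in> o[at_top](tail M X)"
    and "(\<exists>\<epsilon>>0. integrable M (\<lambda>\<omega>. Y \<omega> powr (\<alpha> + \<epsilon>) * s (Y \<omega>)))
         \<or> (\<exists>g :: real \<Rightarrow> real.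
              (\<forall>x\<ge>0. g x > 0) \<and> antimono_on {0..} g \<and> (g \<longlongrightarrow> 0) at_top \<and>
              mono_on {0..} (\<lambda>x. x * g x) \<and> filterlim (\<lambda>x. x * g x) at_top at_top \<and>
              (\<lambda>x. tail M Y (x * g x)) \<in> o[at_top](tail M X) \<and>
              (\<exists>C. eventually (\<lambda>x. \<forall>y\<in>{1..x * g x}. L (x / y) / L x \<le> C) at_top) \<and>
              integrable M (\<lambda>\<omega>. Y \<omega> powr \<alpha> * s (Y \<omega>)))"
  shows "(\<lambda>x. measure M {\<omega> \<in> space M. X \<omega> * Y \<omega> > x})
           \<sim>[at_top] (\<lambda>x. (\<integral>\<omega>. Y \<omega> powr \<alpha> * s (Y \<omega>) \<partial>M) * tail M X x)"
proof -
  note A = assms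
  interpret cd: cdset M X Y s
    by (rule cdset.intro) (use A in auto)
  interpret prob_space M by (fact A(1))
  define E where "E = (\<integral>\<omega>. Y \<omega> powr \<alpha> * s (Y \<omega>) \<partial>M)"
  have both: "integrable M (\<lambda>\<omega>. Y \<omega> powr \<alpha> * s (Y \<omega>)) \<and>
      (\<forall>q>1. \<forall>x0. \<exists>T D. filterlim T at_top at_top \<and>
        eventually (\<lambda>x. x > 0 \<and> T x > 0 \<and> x/(q*T x) \<ge> x0) at_top \<and>
        ((\<lambda>x. tail M Y (T x) / tail M X x) \<longlongrightarrow> 0) at_top \<and> integrable M D \<and> (\<forall>\<omega>\<in>space M. D \<omega> \<ge> 0) \<and>
        eventually (\<lambda>x. \<forall>\<omega>\<in>space M. Y \<omega> \<in> DY M Y \<longrightarrow> Y \<omega> \<le> T x \<longrightarrow>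
               tail M X (x/(q*Y \<omega>)) / tail M X x * s (Y \<omega>) \<le> D \<omega>) at_top)"
    using A(13)
  proof
    assume "\<exists>\<epsilon>>0. integrable M (\<lambda>\<omega>. Y \<omega> powr (\<alpha> + \<epsilon>) * s (Y \<omega>))"
    then obtain \<epsilon> where ep: "\<epsilon> > 0" and int: "integrable M (\<lambda>\<omega>. Y \<omega> powr (\<alpha> + \<epsilon>) * s (Y \<omega>))" by blast
    show ?thesis using cd.case_i_int[OF A(7) ep int] cd.case_i_dom[OF A(8) A(7) ep A(12) int] by blast
  next
    assume "\<exists>g :: real \<Rightarrow> real.
              (\<forall>x\<ge>0. g x > 0) \<and> antimono_on {0..} g \<and> (g \<longlongrightarrow> 0) at_top \<and>
              mono_on {0..} (\<lambda>x. x * g x) \<and> filterlim (\<lambda>x. x * g x) at_top at_top \<and>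
              (\<lambda>x. tail M Y (x * g x)) \<in> o[at_top](tail M X) \<and>
              (\<exists>C. eventually (\<lambda>x. \<forall>y\<in>{1..x * g x}. L (x / y) / L x \<le> C) at_top) \<and>
              integrable M (\<lambda>\<omega>. Y \<omega> powr \<alpha> * s (Y \<omega>))"
    then obtain g C where gpos: "\<forall>x\<ge>0. g x > 0" and glim: "(g \<longlongrightarrow> 0) at_top"
      and xg: "filterlim (\<lambda>x. x * g x) at_top at_top"
      and hYg: "(\<lambda>x. tail M Y (x * g x)) \<in> o[at_top](tail M X)"
      and hL: "eventually (\<lambda>x. \<forall>y\<in>{1..x * g x}. L (x / y) / L x \<le> C) at_top"
      and Eint: "integrable M (\<lambda>\<omega>. Y \<omega> powr \<alpha> * s (Y \<omega>))" by blast
    show ?thesis using Eint cd.case_ii_dom[OF A(8) A(7) A(9) A(11) gpos glim xg hYg hL Eint] by blast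
  qed
  then have Eint: "integrable M (\<lambda>\<omega>. Y \<omega> powr \<alpha> * s (Y \<omega>))" by blast
  have lim: "((\<lambda>x. measure M {\<omega>\<in>space M. X \<omega> * Y \<omega> > x} / tail M X x) \<longlongrightarrow> E) at_top"
    unfolding E_def by (rule cd.core[OF A(8)]) (use both in blast)
  have posf: "\<forall>\<omega>\<in>space M. Y \<omega> powr \<alpha> * s (Y \<omega>) > 0"
    using A(4) cd.s_pos by (auto intro: mult_pos_pos)
  have Enn: "E \<ge> 0" unfolding E_def
    by (intro integral_nonneg_AE AE_I2) (use posf in \<open>auto intro: less_imp_le\<close>)
  have "E \<noteq> 0"
  proof
    assume "E = 0"
    then have "AE \<omega> in M. Y \<omega> powr \<alpha> * s (Y \<omega>) = 0"
      unfolding E_def using integral_nonneg_eq_0_iff_AE[OF Eint] posf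
      by (metis (mono_tags, lifting) AE_I2 less_imp_le)
    then have "AE \<omega> in M. False"
    proof (rule AE_mp)
      show "AE \<omega> in M. Y \<omega> powr \<alpha> * s (Y \<omega>) = 0 \<longrightarrow> False"
      proof (rule AE_I2)
        fix \<omega> assume "\<omega> \<in> space M"
        then have "Y \<omega> powr \<alpha> * s (Y \<omega>) > 0" using posf by blast
        then show "Y \<omega> powr \<alpha> * s (Y \<omega>) = 0 \<longrightarrow> False" by (metis less_irrefl)
      qed
    qed
    then show False by simp
  qed
  with Enn have Epos: "E > 0" by simp
  have "((\<lambda>x. (measure M {\<omega>\<in>space M. X \<omega> * Y \<omega> > x} / tail M X x) / E) \<longlongrightarrow> E / E) at_top"
    by (intro tendsto_intros lim) (use Epos in simp)
  then have "((\<lambda>x. measure M {\<omega>\<in>space M. X \<omega> * Y \<omega> > x} / (E * tail M X x)) \<longlongrightarrow> 1) at_top"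
    using Epos by (simp add: field_simps)
  then show ?thesis unfolding E_def[symmetric] by (rule asymp_equivI')
qed

end
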